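(* Every non-trivial weakly Cauchy sequence $(x_n)_n$ in $J$ admits a subsequence $(x_{n_k})_k$ which is equivalent to the unit vector basis of $J$ and whose closed linear span $[x_{n_k}]_k$ is complemented in $J$.
   Context: The James space $J$ is the space of real sequences $x=(x(n))_{n\in\mathbb N}$ with $\|x\|=\sup\big(\sum_{i=1}^m|\sum_{k\in I_i}x(k)|^2\big)^{1/2}<\infty$, the supremum taken over all $m$ and all pairwise disjoint finite intervals $I_1,\dots,I_m$ of $\mathbb N$; the unit vectors $(e_n)$ form a basis of $J$. A sequence $(x_n)$ in a Banach space $X$ is non-trivial weakly Cauchy if it converges weak$^*$ in $X^{**}$ to some $x^{**}\in X^{**}\setminus X$. *)

theory Defs
  imports "HOL-Analysis.Analysis"
begin

definition adm_intervals :: "nat set set \<Rightarrow> bool" where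
  "adm_intervals F \<longleftrightarrow> finite F \<and> (\<forall>I\<in>F. \<exists>a b. a \<le> b \<and> I = {a..b}) \<and> pairwise disjnt F"

definition jvar :: "(nat \<Rightarrow> real) \<Rightarrow> ereal" where
  "jvar x = (SUP F \<in> {F. adm_intervals F}. ereal (\<Sum>I\<in>F. (\<Sum>k\<in>I. x k)^2))"

definition James :: "(nat \<Rightarrow> real) set" where
  "James = {x. jvar x < \<infinity>}"

definition jnorm :: "(nat \<Rightarrow> real) \<Rightarrow> real" where
  "jnorm x = sqrt (real_of_ereal (jvar x))"

definition unitvec :: "nat \<Rightarrow> nat \<Rightarrow> real" where
  "unitvec n = (\<lambda>k. if k = n then 1 else 0)"

definition lincomb :: "(nat \<Rightarrow> real) \<Rightarrow> (nat \<Rightarrow> nat \<Rightarrow> real) \<Rightarrow> nat \<Rightarrow> nat \<Rightarrow> real" where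
  "lincomb a ys N = (\<lambda>i. \<Sum>k<N. a k * ys k i)"

definition jdual :: "((nat \<Rightarrow> real) \<Rightarrow> real) set" where
  "jdual = {f. (\<forall>x\<in>James. \<forall>y\<in>James. f (\<lambda>i. x i + y i) = f x + f y)
              \<and> (\<forall>c. \<forall>x\<in>James. f (\<lambda>i. c * x i) = c * f x)
              \<and> (\<exists>C. \<forall>x\<in>James. \<bar>f x\<bar> \<le> C * jnorm x)}"

definition dualnorm :: "((nat \<Rightarrow> real) \<Rightarrow> real) \<Rightarrow> real" where
  "dualnorm f = (SUP x \<in> {x\<in>James. jnorm x \<le> 1}. \<bar>f x\<bar>)"

definition jbidual :: "(((nat \<Rightarrow> real) \<Rightarrow> real) \<Rightarrow> real) set" where
  "jbidual = {\<phi>. (\<forall>f\<in>jdual. \<forall>g\<in>jdual. \<phi> (\<lambda>x. f x + g x) = \<phi> f + \<phi> g)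
              \<and> (\<forall>c. \<forall>f\<in>jdual. \<phi> (\<lambda>x. c * f x) = c * \<phi> f)
              \<and> (\<exists>C. \<forall>f\<in>jdual. \<bar>\<phi> f\<bar> \<le> C * dualnorm f)}"

(* non-trivial weakly Cauchy: weak* convergent in J^** to an element not in (the canonical image of) J *)
definition nontriv_weakly_cauchy :: "(nat \<Rightarrow> nat \<Rightarrow> real) \<Rightarrow> bool" where
  "nontriv_weakly_cauchy xs \<longleftrightarrow> (\<forall>n. xs n \<in> James) \<and>
     (\<exists>\<phi>\<in>jbidual. (\<forall>f\<in>jdual. (\<lambda>n. f (xs n)) \<longlonglongrightarrow> \<phi> f)
                   \<and> \<not> (\<exists>x\<in>James. \<forall>f\<in>jdual. \<phi> f = f x))"

definition equiv_unit_basis :: "(nat \<Rightarrow> nat \<Rightarrow> real) \<Rightarrow> bool" where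
  "equiv_unit_basis ys \<longleftrightarrow> (\<exists>C>0. \<forall>a N.
      jnorm (lincomb a unitvec N) \<le> C * jnorm (lincomb a ys N)
    \<and> jnorm (lincomb a ys N) \<le> C * jnorm (lincomb a unitvec N))"

definition closed_span :: "(nat \<Rightarrow> nat \<Rightarrow> real) \<Rightarrow> (nat \<Rightarrow> real) set" where
  "closed_span ys = {y\<in>James. \<forall>\<epsilon>>0. \<exists>a N. jnorm (\<lambda>i. y i - lincomb a ys N i) < \<epsilon>}"

definition complemented :: "(nat \<Rightarrow> real) set \<Rightarrow> bool" where
  "complemented S \<longleftrightarrow> (\<exists>P. (\<forall>x\<in>James. P x \<in> James)
     \<and> (\<forall>x\<in>James. \<forall>y\<in>James. P (\<lambda>i. x i + y i) = (\<lambda>i. P x i + P y i))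
     \<and> (\<forall>c. \<forall>x\<in>James. P (\<lambda>i. c * x i) = (\<lambda>i. c * P x i))
     \<and> (\<exists>C. \<forall>x\<in>James. jnorm (P x) \<le> C * jnorm x)
     \<and> (\<forall>x\<in>James. P (P x) = P x)
     \<and> P ` James = S)"

end

theory Submission
  imports Defs
begin

definition isum :: "(nat \<Rightarrow> real) \<Rightarrow> nat set \<Rightarrow> real" where
  "isum x I = (\<Sum>k\<in>I. x k)"

definition fval :: "(nat \<Rightarrow> real) \<Rightarrow> nat set set \<Rightarrow> real" where
  "fval x F = (\<Sum>I\<in>F. (isum x I)^2)"

lemma fval_nonneg: "0 \<le> fval x F"
  unfolding fval_def by (simp add: sum_nonneg)

lemma jvar_ge: "adm_intervals F \<Longrightarrow> ereal (fval x F) \<le> jvar x"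
  unfolding jvar_def fval_def isum_def by (rule SUP_upper) auto

lemma jvar_le: "(\<And>F. adm_intervals F \<Longrightarrow> fval x F \<le> B) \<Longrightarrow> jvar x \<le> ereal B"
  unfolding jvar_def fval_def isum_def by (rule SUP_least) auto

lemma adm_empty: "adm_intervals {}"
  unfolding adm_intervals_def by auto

lemma jvar_nonneg: "0 \<le> jvar x"
proof -
  have "ereal (fval x {}) \<le> jvar x" by (rule jvar_ge[OF adm_empty])
  thus ?thesis by (simp add: fval_def zero_ereal_def)
qed

lemma James_I: "(\<And>F. adm_intervals F \<Longrightarrow> fval x F \<le> B) \<Longrightarrow> x \<in> James"
  unfolding James_def using jvar_le[of x B] by (auto intro: le_less_trans)

lemma James_jvar: assumes "x \<in> James" shows "jvar x = ereal ((jnorm x)^2)"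
proof -
  have "jvar x < \<infinity>" using assms by (simp add: James_def)
  moreover have "0 \<le> jvar x" by (rule jvar_nonneg)
  ultimately obtain r where r: "jvar x = ereal r" "0 \<le> r"
    by (cases "jvar x") auto
  thus ?thesis unfolding jnorm_def by (simp add: real_of_ereal_pos jvar_nonneg)
qed

lemma fval_le: "x \<in> James \<Longrightarrow> adm_intervals F \<Longrightarrow> fval x F \<le> (jnorm x)^2"
  using jvar_ge[of F x] James_jvar[of x] by simp

lemma jnorm_nonneg: "0 \<le> jnorm x"
  unfolding jnorm_def by (simp add: real_of_ereal_pos jvar_nonneg)

lemma jnorm_le: assumes "\<And>F. adm_intervals F \<Longrightarrow> fval x F \<le> B^2" "0 \<le> B"
  shows "jnorm x \<le> B"
proof -
  have "x \<in> James" using James_I assms(1) by blast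
  have "jvar x \<le> ereal (B^2)" using jvar_le assms(1) by blast
  hence "(jnorm x)^2 \<le> B^2" using James_jvar[OF \<open>x \<in> James\<close>] by simp
  thus ?thesis using assms(2) jnorm_nonneg power2_le_imp_le by blast
qed

lemma sqrt_fval_le: "x \<in> James \<Longrightarrow> adm_intervals F \<Longrightarrow> sqrt (fval x F) \<le> jnorm x"
  using fval_le[of x F] jnorm_nonneg[of x] real_le_rsqrt by (metis real_sqrt_le_mono real_sqrt_abs abs_of_nonneg)

lemma fval_L2: "sqrt (fval x F) = L2_set (isum x) F"
  unfolding fval_def L2_set_def by simp

lemma isum_add: "isum (\<lambda>i. x i + y i) I = isum x I + isum y I"
  unfolding isum_def by (simp add: sum.distrib)
lemma isum_scale: "isum (\<lambda>i. c * x i) I = c * isum x I"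
  unfolding isum_def by (simp add: sum_distrib_left)
lemma isum_minus: "isum (\<lambda>i. x i - y i) I = isum x I - isum y I"
  unfolding isum_def by (simp add: sum_subtractf)
lemma isum_uminus: "isum (\<lambda>i. - x i) I = - isum x I"
  unfolding isum_def by (simp add: sum_negf)

lemma fval_add_le: "sqrt (fval (\<lambda>i. x i + y i) F) \<le> sqrt (fval x F) + sqrt (fval y F)"
  unfolding fval_L2 isum_add by (rule L2_set_triangle_ineq)

lemma fval_scale: "fval (\<lambda>i. c * x i) F = c^2 * fval x F"
  unfolding fval_def isum_scale by (simp add: power_mult_distrib sum_distrib_left)

lemma James_add: assumes "x \<in> James" "y \<in> James"
  shows "(\<lambda>i. x i + y i) \<in> James" "jnorm (\<lambda>i. x i + y i) \<le> jnorm x + jnorm y"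
proof -
  have *: "fval (\<lambda>i. x i + y i) F \<le> (jnorm x + jnorm y)^2" if "adm_intervals F" for F
  proof -
    have "sqrt (fval (\<lambda>i. x i + y i) F) \<le> jnorm x + jnorm y"
      using fval_add_le[of x y F] sqrt_fval_le[OF assms(1) that] sqrt_fval_le[OF assms(2) that] by linarith
    moreover have "0 \<le> jnorm x + jnorm y" using jnorm_nonneg by (simp add: add_nonneg_nonneg)
    ultimately show ?thesis
      by (metis fval_nonneg real_sqrt_le_iff real_sqrt_pow2 sqrt_le_D)
  qed
  show "(\<lambda>i. x i + y i) \<in> James" using James_I * by blast
  show "jnorm (\<lambda>i. x i + y i) \<le> jnorm x + jnorm y"
    using jnorm_le[OF *] jnorm_nonneg by (simp add: add_nonneg_nonneg)
qed

lemma James_scale_le: assumes "x \<in> James"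
  shows "(\<lambda>i. c * x i) \<in> James" "jnorm (\<lambda>i. c * x i) \<le> \<bar>c\<bar> * jnorm x"
proof -
  have *: "fval (\<lambda>i. c * x i) F \<le> (\<bar>c\<bar> * jnorm x)^2" if "adm_intervals F" for F
    using fval_le[OF assms that] unfolding fval_scale power_mult_distrib
    by (simp add: mult_left_mono)
  show "(\<lambda>i. c * x i) \<in> James" using James_I * by blast
  show "jnorm (\<lambda>i. c * x i) \<le> \<bar>c\<bar> * jnorm x"
    using jnorm_le[OF *] jnorm_nonneg by simp
qed

lemma James_scale: assumes "x \<in> James"
  shows "jnorm (\<lambda>i. c * x i) = \<bar>c\<bar> * jnorm x"
proof (cases "c = 0")
  case True
  have "jnorm (\<lambda>i. 0) \<le> 0" by (rule jnorm_le) (auto simp: fval_def isum_def)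
  thus ?thesis using True jnorm_nonneg[of "\<lambda>i. 0"] by simp
next
  case False
  have a: "jnorm (\<lambda>i. c * x i) \<le> \<bar>c\<bar> * jnorm x" by (rule James_scale_le[OF assms])
  have "jnorm (\<lambda>i. (1/c) * (c * x i)) \<le> \<bar>1/c\<bar> * jnorm (\<lambda>i. c * x i)"
    by (rule James_scale_le(2)[OF James_scale_le(1)[OF assms]])
  hence "jnorm x \<le> \<bar>1/c\<bar> * jnorm (\<lambda>i. c * x i)" using False by simp
  hence "\<bar>c\<bar> * jnorm x \<le> jnorm (\<lambda>i. c * x i)" using False
    by (simp add: field_simps)
  thus ?thesis using a by simp
qed

lemma zero_James: "(\<lambda>i. 0) \<in> James"
  by (rule James_I[of _ 0]) (simp add: fval_def isum_def)

lemma adm_single: "adm_intervals {{a..b}}" if "a \<le> b"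
  using that unfolding adm_intervals_def by auto

lemma isum_le_jnorm: assumes "x \<in> James" "a \<le> b"
  shows "\<bar>isum x {a..b}\<bar> \<le> jnorm x"
proof -
  have "sqrt (fval x {{a..b}}) \<le> jnorm x" by (rule sqrt_fval_le[OF assms(1) adm_single[OF assms(2)]])
  thus ?thesis by (simp add: fval_def)
qed

lemma coord_le_jnorm: assumes "x \<in> James" shows "\<bar>x k\<bar> \<le> jnorm x"
  using isum_le_jnorm[OF assms, of k k] by (simp add: isum_def)

lemma jnorm_zero_iff: assumes "x \<in> James" shows "jnorm x = 0 \<longleftrightarrow> x = (\<lambda>i. 0)"
proof
  assume "jnorm x = 0" thus "x = (\<lambda>i. 0)" using coord_le_jnorm[OF assms] by (intro ext) (metis abs_le_zero_iff)
next
  assume "x = (\<lambda>i. 0)"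
  hence "jnorm x \<le> 0" by (intro jnorm_le) (auto simp: fval_def isum_def)
  thus "jnorm x = 0" using jnorm_nonneg[of x] by simp
qed

typedef jam = James
  morphisms Rep_jam Abs_jam
  using zero_James by blast

setup_lifting type_definition_jam

lemma James_uminus: "x \<in> James \<Longrightarrow> (\<lambda>i. - x i) \<in> James"
  using James_scale_le(1)[of x "-1"] by simp
lemma James_diff: "x \<in> James \<Longrightarrow> y \<in> James \<Longrightarrow> (\<lambda>i. x i - y i) \<in> James"
  using James_add(1)[of x "\<lambda>i. - y i"] James_uminus[of y] by simp

instantiation jam :: real_normed_vector
begin
lift_definition zero_jam :: jam is "\<lambda>i. 0" by (rule zero_James)
lift_definition plus_jam :: "jam \<Rightarrow> jam \<Rightarrow> jam" is "\<lambda>x y i. x i + y i" by (rule James_add(1))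
lift_definition uminus_jam :: "jam \<Rightarrow> jam" is "\<lambda>x i. - x i" by (rule James_uminus)
lift_definition minus_jam :: "jam \<Rightarrow> jam \<Rightarrow> jam" is "\<lambda>x y i. x i - y i" by (rule James_diff)
lift_definition scaleR_jam :: "real \<Rightarrow> jam \<Rightarrow> jam" is "\<lambda>c x i. c * x i" by (rule James_scale_le(1))
lift_definition norm_jam :: "jam \<Rightarrow> real" is "jnorm" .
definition sgn_jam :: "jam \<Rightarrow> jam" where "sgn_jam x = scaleR (inverse (norm x)) x"
definition dist_jam :: "jam \<Rightarrow> jam \<Rightarrow> real" where "dist_jam x y = norm (x - y)"
definition uniformity_jam :: "(jam \<times> jam) filter" where
  "uniformity_jam = (INF e\<in>{0<..}. principal {(x, y). dist x y < e})"
definition open_jam :: "jam set \<Rightarrow> bool" where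
  "open_jam U = (\<forall>x\<in>U. \<forall>\<^sub>F (x', y) in uniformity. x' = x \<longrightarrow> y \<in> U)"
instance
proof
  fix a b c :: jam and r s :: real
  show "a + b + c = a + (b + c)" by transfer (simp add: algebra_simps)
  show "a + b = b + a" by transfer (simp add: algebra_simps)
  show "0 + a = a" by transfer simp
  show "- a + a = 0" by transfer simp
  show "a - b = a + - b" by transfer simp
  show "r *\<^sub>R (a + b) = r *\<^sub>R a + r *\<^sub>R b" by transfer (simp add: algebra_simps)
  show "(r + s) *\<^sub>R a = r *\<^sub>R a + s *\<^sub>R a" by transfer (simp add: algebra_simps)
  show "r *\<^sub>R s *\<^sub>R a = (r * s) *\<^sub>R a" by transfer (simp add: algebra_simps)
  show "1 *\<^sub>R a = a" by transfer simp
  show "(norm a = 0) = (a = 0)" by transfer (simp add: jnorm_zero_iff)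
  show "norm (a + b) \<le> norm a + norm b" by transfer (rule James_add(2))
  show "norm (r *\<^sub>R a) = \<bar>r\<bar> * norm a" by transfer (rule James_scale)
  show "sgn a = inverse (norm a) *\<^sub>R a" by (simp add: sgn_jam_def)
  show "dist a b = norm (a - b)" by (simp add: dist_jam_def)
  show "uniformity = (INF e\<in>{0<..}. principal {(x, y). dist (x::jam) y < e})" by (simp add: uniformity_jam_def)
  fix U :: "jam set"
  show "open U = (\<forall>x\<in>U. \<forall>\<^sub>F (x', y) in uniformity. x' = x \<longrightarrow> y \<in> U)" by (simp add: open_jam_def)
qed
end

lemma Rep_zero[simp]: "Rep_jam 0 = (\<lambda>i. 0)" by transfer simp
lemma Rep_add: "Rep_jam (x + y) = (\<lambda>i. Rep_jam x i + Rep_jam y i)" by transfer simp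
lemma Rep_diff: "Rep_jam (x - y) = (\<lambda>i. Rep_jam x i - Rep_jam y i)" by transfer simp
lemma Rep_uminus: "Rep_jam (- x) = (\<lambda>i. - Rep_jam x i)" by transfer simp
lemma Rep_scaleR: "Rep_jam (r *\<^sub>R x) = (\<lambda>i. r * Rep_jam x i)" by transfer simp
lemma norm_Rep: "norm x = jnorm (Rep_jam x)" by transfer simp
lemma Rep_James: "Rep_jam x \<in> James" by (rule Rep_jam)
lemma Rep_add_pt[simp]: "Rep_jam (x + y) i = Rep_jam x i + Rep_jam y i" by (simp add: Rep_add)
lemma Rep_diff_pt[simp]: "Rep_jam (x - y) i = Rep_jam x i - Rep_jam y i" by (simp add: Rep_diff)
lemma Rep_uminus_pt[simp]: "Rep_jam (- x) i = - Rep_jam x i" by (simp add: Rep_uminus)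
lemma Rep_scaleR_pt[simp]: "Rep_jam (r *\<^sub>R x) i = r * Rep_jam x i" by (simp add: Rep_scaleR)
lemma Rep_sum_pt[simp]: "Rep_jam (\<Sum>j\<in>A. f j) i = (\<Sum>j\<in>A. Rep_jam (f j) i)"
  by (induction A rule: infinite_finite_induct) auto
lemma Rep_sum: "Rep_jam (\<Sum>j\<in>A. f j) = (\<lambda>i. \<Sum>j\<in>A. Rep_jam (f j) i)"
  by auto

lemma coord_le_norm: "\<bar>Rep_jam x k\<bar> \<le> norm x"
  by (simp add: norm_Rep coord_le_jnorm Rep_James)

lemma fval_le_norm: "adm_intervals F \<Longrightarrow> sqrt (fval (Rep_jam x) F) \<le> norm x"
  by (simp add: norm_Rep sqrt_fval_le Rep_James)

lemma norm_le_fval: "(\<And>F. adm_intervals F \<Longrightarrow> fval (Rep_jam x) F \<le> B^2) \<Longrightarrow> 0 \<le> B \<Longrightarrow> norm x \<le> B"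
  by (simp add: norm_Rep jnorm_le)

lemma isum_le_norm: "a \<le> b \<Longrightarrow> \<bar>isum (Rep_jam x) {a..b}\<bar> \<le> norm x"
  by (simp add: norm_Rep isum_le_jnorm Rep_James)

text \<open>Completeness\<close>

lemma fval_tendsto:
  assumes "\<And>k. (\<lambda>m. X m k) \<longlonglongrightarrow> z k" "finite F" "\<forall>I\<in>F. finite I"
  shows "(\<lambda>m. fval (X m) F) \<longlonglongrightarrow> fval z F"
  unfolding fval_def isum_def using assms
  by (auto intro!: tendsto_intros tendsto_sum)

instance jam :: banach
proof
  fix X :: "nat \<Rightarrow> jam" assume "Cauchy X"
  have coordC: "Cauchy (\<lambda>m. Rep_jam (X m) k)" for k
  proof (rule metric_CauchyI)
    fix e :: real assume "0 < e"
    from metric_CauchyD[OF \<open>Cauchy X\<close> this] obtain M where M: "\<forall>m\<ge>M. \<forall>n\<ge>M. dist (X m) (X n) < e" by blast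
    show "\<exists>M. \<forall>m\<ge>M. \<forall>n\<ge>M. dist (Rep_jam (X m) k) (Rep_jam (X n) k) < e"
    proof (intro exI allI impI)
      fix m n assume "M \<le> m" "M \<le> n"
      have "\<bar>Rep_jam (X m - X n) k\<bar> \<le> norm (X m - X n)" by (rule coord_le_norm)
      thus "dist (Rep_jam (X m) k) (Rep_jam (X n) k) < e" using M \<open>M \<le> m\<close> \<open>M \<le> n\<close>
        by (simp add: dist_real_def dist_norm) (meson le_less_trans)
    qed
  qed
  define z where "z k = lim (\<lambda>m. Rep_jam (X m) k)" for k
  have zlim: "(\<lambda>m. Rep_jam (X m) k) \<longlonglongrightarrow> z k" for k
    unfolding z_def using coordC convergent_LIMSEQ_iff Cauchy_convergent_iff by blast
  have key: "\<exists>M. \<forall>m\<ge>M. (\<lambda>i. Rep_jam (X m) i - z i) \<in> James \<and> jnorm (\<lambda>i. Rep_jam (X m) i - z i) \<le> e"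
    if "0 < e" for e
  proof -
    from metric_CauchyD[OF \<open>Cauchy X\<close> that] obtain M where M: "\<forall>m\<ge>M. \<forall>n\<ge>M. dist (X m) (X n) < e" by blast
    show ?thesis
    proof (intro exI allI impI conjI)
      fix m assume "M \<le> m"
      have b: "fval (\<lambda>i. Rep_jam (X m) i - z i) F \<le> e^2" if "adm_intervals F" for F
      proof -
        have fin: "finite F" "\<forall>I\<in>F. finite I" using that unfolding adm_intervals_def by auto
        have "(\<lambda>n. fval (Rep_jam (X m - X n)) F) \<longlonglongrightarrow> fval (\<lambda>i. Rep_jam (X m) i - z i) F"
          by (rule fval_tendsto[OF _ fin]) (auto simp: Rep_diff intro!: tendsto_intros zlim)
        moreover have "\<forall>\<^sub>F n in sequentially. fval (Rep_jam (X m - X n)) F \<le> e^2"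
        proof (rule eventually_sequentiallyI[of M])
          fix n assume "M \<le> n"
          have "sqrt (fval (Rep_jam (X m - X n)) F) \<le> norm (X m - X n)" by (rule fval_le_norm[OF that])
          also have "\<dots> < e" using M \<open>M \<le> m\<close> \<open>M \<le> n\<close> by (simp add: dist_norm)
          finally show "fval (Rep_jam (X m - X n)) F \<le> e^2"
            using fval_nonneg by (metis less_eq_real_def real_sqrt_less_iff real_sqrt_pow2 sqrt_le_D)
        qed
        ultimately show ?thesis by (rule tendsto_upperbound) simp
      qed
      show "(\<lambda>i. Rep_jam (X m) i - z i) \<in> James" using James_I b by blast
      show "jnorm (\<lambda>i. Rep_jam (X m) i - z i) \<le> e" using jnorm_le[OF b] \<open>0 < e\<close> by simp
    qed
  qed
  obtain M where "(\<lambda>i. Rep_jam (X M) i - z i) \<in> James" using key[of 1] by auto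
  hence zJ: "z \<in> James" using James_diff[OF Rep_James[of "X M"], of "\<lambda>i. Rep_jam (X M) i - z i"] by simp
  have "X \<longlonglongrightarrow> Abs_jam z"
  proof (rule LIMSEQ_I)
    fix e :: real assume "0 < e"
    then obtain M where M: "\<forall>m\<ge>M. jnorm (\<lambda>i. Rep_jam (X m) i - z i) \<le> e/2" using key[of "e/2"] by auto
    show "\<exists>M. \<forall>m\<ge>M. norm (X m - Abs_jam z) < e"
    proof (intro exI allI impI)
      fix m assume "M \<le> m"
      have "norm (X m - Abs_jam z) = jnorm (\<lambda>i. Rep_jam (X m) i - z i)"
        by (simp add: norm_Rep Rep_diff Abs_jam_inverse zJ)
      thus "norm (X m - Abs_jam z) < e" using M \<open>M \<le> m\<close> \<open>0 < e\<close> by fastforce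
    qed
  qed
  thus "convergent X" by (rule convergentI)
qed

definition ivl :: "nat set \<Rightarrow> bool" where
  "ivl A \<longleftrightarrow> A = {} \<or> (\<exists>a b. a \<le> b \<and> A = {a..b})"

definition cvx :: "nat set \<Rightarrow> bool" where
  "cvx A \<longleftrightarrow> (\<forall>x y z. x \<in> A \<longrightarrow> z \<in> A \<longrightarrow> x \<le> y \<longrightarrow> y \<le> z \<longrightarrow> y \<in> A)"

lemma cvx_ivl: assumes "finite A" "cvx A" shows "ivl A"
proof (cases "A = {}")
  case True thus ?thesis by (simp add: ivl_def)
next
  case False
  have "A = {Min A..Max A}"
  proof
    show "A \<subseteq> {Min A..Max A}" using assms(1) by auto
    show "{Min A..Max A} \<subseteq> A"
    proof
      fix y assume "y \<in> {Min A..Max A}"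
      moreover have "Min A \<in> A" "Max A \<in> A" using assms(1) False by auto
      ultimately show "y \<in> A" using assms(2) unfolding cvx_def by (meson atLeastAtMost_iff)
    qed
  qed
  moreover have "Min A \<le> Max A" using assms(1) False by simp
  ultimately show ?thesis unfolding ivl_def by blast
qed

lemma ivl_atLeastAtMost: "ivl {a..b}"
  unfolding ivl_def by (cases "a \<le> b") auto

lemma cvx_atLeastAtMost: "cvx {a..b}" unfolding cvx_def by auto
lemma cvx_Int: "cvx A \<Longrightarrow> cvx B \<Longrightarrow> cvx (A \<inter> B)" unfolding cvx_def by blast
lemma cvx_atLeast: "cvx {a..}" unfolding cvx_def by auto
lemma cvx_lessThan: "cvx {..<a}" unfolding cvx_def by auto
lemma cvx_atLeastLessThan: "cvx {a..<b}" unfolding cvx_def by auto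
lemma cvx_atMost: "cvx {..a}" unfolding cvx_def by auto

lemma adm_elem: "adm_intervals F \<Longrightarrow> I \<in> F \<Longrightarrow> \<exists>a b. a \<le> b \<and> I = {a..b}"
  unfolding adm_intervals_def by blast
lemma adm_finite: "adm_intervals F \<Longrightarrow> finite F"
  unfolding adm_intervals_def by blast
lemma adm_disj: "adm_intervals F \<Longrightarrow> I \<in> F \<Longrightarrow> J \<in> F \<Longrightarrow> I \<noteq> J \<Longrightarrow> I \<inter> J = {}"
  unfolding adm_intervals_def pairwise_def disjnt_def by blast
lemma adm_elem_finite: "adm_intervals F \<Longrightarrow> I \<in> F \<Longrightarrow> finite I"
  using adm_elem by blast
lemma adm_elem_ne: "adm_intervals F \<Longrightarrow> I \<in> F \<Longrightarrow> I \<noteq> {}"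
  using adm_elem by fastforce
lemma adm_elem_cvx: "adm_intervals F \<Longrightarrow> I \<in> F \<Longrightarrow> cvx I"
  using adm_elem cvx_atLeastAtMost by metis

lemma image_adm:
  assumes "finite F" "\<forall>I\<in>F. ivl (G I)" "\<forall>I\<in>F. \<forall>I'\<in>F. I \<noteq> I' \<longrightarrow> G I \<inter> G I' = {}"
  shows "adm_intervals (G ` F - {{}})"
  unfolding adm_intervals_def
proof (intro conjI ballI)
  show "finite (G ` F - {{}})" using assms(1) by simp
  fix J assume "J \<in> G ` F - {{}}"
  then obtain I where I: "I \<in> F" "J = G I" "J \<noteq> {}" by blast
  hence "ivl J" using assms(2) by simp
  thus "\<exists>a b. a \<le> b \<and> J = {a..b}" using I(3) unfolding ivl_def by simp
next
  show "pairwise disjnt (G ` F - {{}})"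
  proof (rule pairwiseI)
    fix J J' assume J: "J \<in> G ` F - {{}}" and J': "J' \<in> G ` F - {{}}" and ne: "J \<noteq> J'"
    obtain I where I: "I \<in> F" "J = G I" using J by blast
    obtain I' where I': "I' \<in> F" "J' = G I'" using J' by blast
    have "I \<noteq> I'" using I I' ne by metis
    hence "G I \<inter> G I' = {}" using assms(3) I(1) I'(1) by simp
    thus "disjnt J J'" unfolding disjnt_def using I I' by simp
  qed
qed

lemma image_sum:
  assumes "finite F" "\<forall>I\<in>F. \<forall>I'\<in>F. I \<noteq> I' \<longrightarrow> G I \<inter> G I' = {}" "h {} = (0::real)"
  shows "(\<Sum>I\<in>F. h (G I)) = (\<Sum>J\<in>G ` F - {{}}. h J)"
proof -
  have "(\<Sum>I\<in>F. h (G I)) = (\<Sum>I\<in>{I\<in>F. G I \<noteq> {}}. h (G I))"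
    using assms(1,3) by (intro sum.mono_neutral_right) auto
  also have "\<dots> = (\<Sum>J\<in>G ` {I\<in>F. G I \<noteq> {}}. h J)"
  proof (rule sum.reindex[symmetric, unfolded comp_def])
    show "inj_on G {I \<in> F. G I \<noteq> {}}"
      unfolding inj_on_def using assms(2) by blast
  qed
  also have "G ` {I\<in>F. G I \<noteq> {}} = G ` F - {{}}" by auto
  finally show ?thesis .
qed

lemma fam_image:
  assumes "z \<in> James" "adm_intervals F" "\<forall>I\<in>F. ivl (G I)"
    "\<forall>I\<in>F. \<forall>I'\<in>F. I \<noteq> I' \<longrightarrow> G I \<inter> G I' = {}"
  shows "(\<Sum>I\<in>F. (isum z (G I))^2) \<le> (jnorm z)^2"
proof -
  have fin: "finite F" using assms(2) adm_finite by blast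
  have "(\<Sum>I\<in>F. (isum z (G I))^2) = (\<Sum>J\<in>G ` F - {{}}. (isum z J)^2)"
    by (rule image_sum[OF fin assms(4)]) (simp add: isum_def)
  also have "\<dots> = fval z (G ` F - {{}})" by (simp add: fval_def)
  also have "\<dots> \<le> (jnorm z)^2" by (rule fval_le[OF assms(1) image_adm[OF fin assms(3,4)]])
  finally show ?thesis .
qed

definition R :: "nat set \<Rightarrow> (nat \<Rightarrow> real) \<Rightarrow> nat \<Rightarrow> real" where
  "R A x = (\<lambda>k. if k \<in> A then x k else 0)"

lemma isum_R: "finite I \<Longrightarrow> isum (R A x) I = isum x (I \<inter> A)"
  unfolding isum_def R_def by (simp add: sum.inter_restrict)

lemma R_James: assumes "x \<in> James" "cvx A"
  shows "R A x \<in> James" "jnorm (R A x) \<le> jnorm x"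
proof -
  have *: "fval (R A x) F \<le> (jnorm x)^2" if "adm_intervals F" for F
  proof -
    have "fval (R A x) F = (\<Sum>I\<in>F. (isum x (I \<inter> A))^2)"
      unfolding fval_def using isum_R adm_elem_finite[OF that] by simp
    also have "\<dots> \<le> (jnorm x)^2"
    proof (rule fam_image[OF assms(1) that])
      show "\<forall>I\<in>F. ivl (I \<inter> A)"
      proof
        fix I assume "I \<in> F"
        show "ivl (I \<inter> A)"
          by (rule cvx_ivl) (use adm_elem_finite[OF that \<open>I \<in> F\<close>] cvx_Int[OF adm_elem_cvx[OF that \<open>I \<in> F\<close>] assms(2)] in auto)
      qed
      show "\<forall>I\<in>F. \<forall>I'\<in>F. I \<noteq> I' \<longrightarrow> I \<inter> A \<inter> (I' \<inter> A) = {}"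
        using adm_disj[OF that] by blast
    qed
    finally show ?thesis .
  qed
  show "R A x \<in> James" using James_I * by blast
  show "jnorm (R A x) \<le> jnorm x" using jnorm_le[OF *] jnorm_nonneg by blast
qed

lemma exists_near_sup:
  assumes "x \<in> James" "0 < e"
  shows "\<exists>F. adm_intervals F \<and> (jnorm x)^2 - e < fval x F"
proof (rule ccontr)
  assume "\<not> ?thesis"
  hence "\<And>F. adm_intervals F \<Longrightarrow> fval x F \<le> (jnorm x)^2 - e" by force
  hence "jvar x \<le> ereal ((jnorm x)^2 - e)" by (rule jvar_le)
  thus False using James_jvar[OF assms(1)] assms(2) by simp
qed

lemma tail_small:
  assumes "x \<in> James" "0 < e"
  shows "\<exists>p. \<forall>q\<ge>p. jnorm (R {q..} x) \<le> e"
proof -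
  obtain F where F: "adm_intervals F" "(jnorm x)^2 - e^2 < fval x F"
    using exists_near_sup[OF assms(1), of "e^2"] assms(2) by auto
  have finU: "finite (\<Union>F)"
    by (rule finite_Union[OF adm_finite[OF F(1)]]) (rule adm_elem_finite[OF F(1)])
  define p where "p = Suc (Max (insert 0 (\<Union>F)))"
  have pF: "k < p" if "k \<in> \<Union>F" for k
  proof -
    have "k \<le> Max (insert 0 (\<Union>F))" by (rule Max_ge) (use finU that in auto)
    thus ?thesis unfolding p_def by simp
  qed
  show ?thesis
  proof (intro exI allI impI)
    fix q assume "p \<le> q"
    have *: "fval (R {q..} x) G \<le> e^2" if G: "adm_intervals G" for G
    proof -
      have finG: "finite G" using adm_finite[OF G] .
      let ?G = "\<lambda>I. I \<inter> {q..}"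
      have ivlG: "\<forall>I\<in>G. ivl (?G I)"
      proof
        fix I assume "I \<in> G"
        show "ivl (?G I)"
          by (rule cvx_ivl) (use adm_elem_finite[OF G \<open>I \<in> G\<close>] cvx_Int[OF adm_elem_cvx[OF G \<open>I \<in> G\<close>] cvx_atLeast] in auto)
      qed
      have disG: "\<forall>I\<in>G. \<forall>I'\<in>G. I \<noteq> I' \<longrightarrow> ?G I \<inter> ?G I' = {}" using adm_disj[OF G] by blast
      define G' where "G' = ?G ` G - {{}}"
      have admG': "adm_intervals G'" unfolding G'_def by (rule image_adm[OF finG ivlG disG])
      have "fval (R {q..} x) G = (\<Sum>I\<in>G. (isum x (?G I))^2)"
        unfolding fval_def using isum_R adm_elem_finite[OF G] by simp
      also have "\<dots> = fval x G'"
        unfolding G'_def fval_def by (rule image_sum[OF finG disG]) (simp add: isum_def)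
      finally have eq: "fval (R {q..} x) G = fval x G'" .
      have G'q: "\<forall>J\<in>G'. J \<subseteq> {q..}" unfolding G'_def by auto
      have G'ne: "\<forall>J\<in>G'. J \<noteq> {}" unfolding G'_def by auto
      have disj: "\<forall>I\<in>F. \<forall>J\<in>G'. I \<inter> J = {}"
      proof (intro ballI)
        fix I J assume "I \<in> F" "J \<in> G'"
        show "I \<inter> J = {}"
        proof (rule ccontr)
          assume "I \<inter> J \<noteq> {}"
          then obtain k where "k \<in> I" "k \<in> J" by blast
          have "k \<in> \<Union>F" using \<open>k \<in> I\<close> \<open>I \<in> F\<close> by blast
          hence "k < p" by (rule pF)
          moreover have "q \<le> k" using G'q \<open>J \<in> G'\<close> \<open>k \<in> J\<close> by blast
          ultimately show False using \<open>p \<le> q\<close> by simp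
        qed
      qed
      have FG: "F \<inter> G' = {}"
      proof (rule ccontr)
        assume "F \<inter> G' \<noteq> {}"
        then obtain I where I: "I \<in> F" "I \<in> G'" by blast
        have "I \<inter> I = {}" by (rule disj[rule_format, OF I])
        thus False using G'ne I(2) by simp
      qed
      have adm: "adm_intervals (F \<union> G')"
        unfolding adm_intervals_def
      proof (intro conjI)
        show "finite (F \<union> G')" using adm_finite[OF F(1)] adm_finite[OF admG'] by simp
        show "\<forall>I\<in>F \<union> G'. \<exists>a b. a \<le> b \<and> I = {a..b}"
          using adm_elem[OF F(1)] adm_elem[OF admG'] by (metis Un_iff)
        show "pairwise disjnt (F \<union> G')"
        proof (rule pairwiseI)
          fix I J assume "I \<in> F \<union> G'" "J \<in> F \<union> G'" "I \<noteq> J"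
          thus "disjnt I J" unfolding disjnt_def
            using adm_disj[OF F(1)] adm_disj[OF admG'] disj by (metis Int_commute Un_iff)
        qed
      qed
      have "fval x (F \<union> G') = fval x F + fval x G'"
        unfolding fval_def by (rule sum.union_disjoint[OF adm_finite[OF F(1)] adm_finite[OF admG'] FG])
      moreover have "fval x (F \<union> G') \<le> (jnorm x)^2" by (rule fval_le[OF assms(1) adm])
      ultimately show ?thesis using eq F(2) by linarith
    qed
    show "jnorm (R {q..} x) \<le> e" using jnorm_le[OF *] assms(2) by simp
  qed
qed

lemma isum_unitvec: "finite I \<Longrightarrow> isum (unitvec k) I = (if k \<in> I then 1 else 0)"
  unfolding isum_def unitvec_def by simp

lemma unitvec_James: "unitvec k \<in> James" "jnorm (unitvec k) \<le> 1"
proof -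
  have *: "fval (unitvec k) F \<le> 1^2" if F: "adm_intervals F" for F
  proof -
    have "fval (unitvec k) F = (\<Sum>I\<in>F. (if k \<in> I then 1 else 0))"
      unfolding fval_def using isum_unitvec adm_elem_finite[OF F] by (intro sum.cong) auto
    also have "\<dots> = real (card {I\<in>F. k \<in> I})"
      using adm_finite[OF F] by (simp add: sum.If_cases Int_def)
    also have "card {I\<in>F. k \<in> I} \<le> 1"
    proof -
      have "finite {I\<in>F. k \<in> I}" using adm_finite[OF F] by simp
      moreover have "\<forall>a\<in>{I\<in>F. k \<in> I}. \<forall>b\<in>{I\<in>F. k \<in> I}. a = b"
      proof (intro ballI)
        fix a b assume "a \<in> {I\<in>F. k \<in> I}" "b \<in> {I\<in>F. k \<in> I}"
        hence "a \<in> F" "b \<in> F" "k \<in> a" "k \<in> b" by auto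
        thus "a = b" using adm_disj[OF F, of a b] by auto
      qed
      ultimately have "card {I\<in>F. k \<in> I} \<le> Suc 0" by (subst card_le_Suc0_iff_eq) auto
      thus ?thesis by simp
    qed
    finally show ?thesis by simp
  qed
  show "unitvec k \<in> James" using James_I * by blast
  show "jnorm (unitvec k) \<le> 1" using jnorm_le[OF *] by simp
qed

definition E :: "nat \<Rightarrow> jam" where "E k = Abs_jam (unitvec k)"

lemma Rep_E: "Rep_jam (E k) = unitvec k"
  unfolding E_def using unitvec_James(1) by (simp add: Abs_jam_inverse)

lemma norm_E: "norm (E k) \<le> 1"
  using unitvec_James(2) by (simp add: norm_Rep Rep_E)

lemma jam_eqI: "(\<And>i. Rep_jam x i = Rep_jam y i) \<Longrightarrow> x = y"
  using Rep_jam_inject by (metis ext)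

lemma finite_support_norm:
  assumes "finite S" "\<And>k. k \<notin> S \<Longrightarrow> Rep_jam x k = 0"
  shows "norm x \<le> (\<Sum>k\<in>S. \<bar>Rep_jam x k\<bar>)"
proof -
  have "x = (\<Sum>k\<in>S. Rep_jam x k *\<^sub>R E k)"
  proof (rule jam_eqI)
    fix i
    have "Rep_jam (\<Sum>k\<in>S. Rep_jam x k *\<^sub>R E k) i = (\<Sum>k\<in>S. Rep_jam x k * unitvec k i)"
      by (simp add: Rep_E)
    also have "\<dots> = (if i \<in> S then Rep_jam x i else 0)"
      unfolding unitvec_def using assms(1) by (simp add: if_distrib sum.delta cong: if_cong)
    also have "\<dots> = Rep_jam x i" using assms(2) by auto
    finally show "Rep_jam x i = Rep_jam (\<Sum>k\<in>S. Rep_jam x k *\<^sub>R E k) i" by simp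
  qed
  hence "norm x = norm (\<Sum>k\<in>S. Rep_jam x k *\<^sub>R E k)" by simp
  also have "\<dots> \<le> (\<Sum>k\<in>S. norm (Rep_jam x k *\<^sub>R E k))" by (rule norm_sum)
  also have "\<dots> \<le> (\<Sum>k\<in>S. \<bar>Rep_jam x k\<bar>)"
    using norm_E by (intro sum_mono) (simp add: mult_left_le)
  finally show ?thesis .
qed

text \<open>Blocks\<close>

lemma sum_blocks:
  fixes p :: "nat \<Rightarrow> nat"
  assumes "mono p" "s \<le> t"
  shows "(\<Sum>j\<in>{s..<t}. \<Sum>k\<in>{p j..<p (Suc j)}. f k) = (\<Sum>k\<in>{p s..<p t}. (f k::real))"
  using assms(2)
proof (induction t)
  case 0 thus ?case by simp
next
  case (Suc t)
  show ?case
  proof (cases "s = Suc t")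
    case True thus ?thesis by simp
  next
    case False
    hence st: "s \<le> t" using Suc.prems by simp
    have "(\<Sum>j\<in>{s..<Suc t}. \<Sum>k\<in>{p j..<p (Suc j)}. f k) = (\<Sum>k\<in>{p s..<p t}. f k) + (\<Sum>k\<in>{p t..<p (Suc t)}. f k)"
      using Suc.IH[OF st] st by simp
    also have "\<dots> = (\<Sum>k\<in>{p s..<p (Suc t)}. f k)"
    proof -
      have "p s \<le> p t" "p t \<le> p (Suc t)" using assms(1) st by (auto simp: mono_def)
      thus ?thesis by (rule sum.atLeastLessThan_concat)
    qed
    finally show ?thesis .
  qed
qed

definition tr :: "nat \<Rightarrow> (nat \<Rightarrow> real) \<Rightarrow> nat \<Rightarrow> real" where
  "tr N a = (\<lambda>i. if i < N then a i else 0)"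

lemma finsupp_James:
  assumes "finite S" "\<And>k. k \<notin> S \<Longrightarrow> x k = 0"
  shows "x \<in> James"
proof -
  have "Rep_jam (\<Sum>k\<in>S. x k *\<^sub>R E k) = x"
  proof
    fix i
    have "Rep_jam (\<Sum>k\<in>S. x k *\<^sub>R E k) i = (\<Sum>k\<in>S. x k * unitvec k i)"
      by (simp add: Rep_E)
    also have "\<dots> = (if i \<in> S then x i else 0)"
      unfolding unitvec_def using assms(1) by (simp add: if_distrib cong: if_cong)
    also have "\<dots> = x i" using assms(2) by auto
    finally show "Rep_jam (\<Sum>k\<in>S. x k *\<^sub>R E k) i = x i" .
  qed
  thus ?thesis using Rep_James by metis
qed

lemma tr_James: "tr N a \<in> James"
  by (rule finsupp_James[of "{..<N}"]) (auto simp: tr_def)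

definition blk :: "(nat \<Rightarrow> nat) \<Rightarrow> nat \<Rightarrow> nat set" where
  "blk p j = {p j..<p (Suc j)}"

lemma blk_disj:
  assumes "strict_mono p" "m \<in> blk p i" "m \<in> blk p i'" shows "i = i'"
proof (rule ccontr)
  assume "i \<noteq> i'"
  hence "i < i' \<or> i' < i" by arith
  thus False
  proof
    assume "i < i'" hence "p (Suc i) \<le> p i'" using assms(1) by (simp add: strict_mono_less_eq)
    thus False using assms(2,3) by (simp add: blk_def)
  next
    assume "i' < i" hence "p (Suc i') \<le> p i" using assms(1) by (simp add: strict_mono_less_eq)
    thus False using assms(2,3) by (simp add: blk_def)
  qed
qed

lemma blk_ne: "strict_mono p \<Longrightarrow> p j \<in> blk p j"
  unfolding blk_def by (simp add: strict_mono_def)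

lemma isum_bsum:
  assumes "strict_mono p" "s \<le> t"
  shows "isum (\<lambda>j. isum x (blk p j)) {s..t} = isum x {p s..<p (Suc t)}"
proof -
  have "isum (\<lambda>j. isum x (blk p j)) {s..t} = (\<Sum>j\<in>{s..<Suc t}. \<Sum>k\<in>{p j..<p (Suc j)}. x k)"
    unfolding isum_def blk_def by (simp add: atLeastLessThanSuc_atLeastAtMost)
  also have "\<dots> = (\<Sum>k\<in>{p s..<p (Suc t)}. x k)"
    by (rule sum_blocks) (use assms in \<open>auto simp: strict_mono_mono\<close>)
  finally show ?thesis by (simp add: isum_def)
qed

lemma bsum_James:
  assumes "strict_mono p" "x \<in> James"
  shows "(\<lambda>j. isum x (blk p j)) \<in> James" "jnorm (\<lambda>j. isum x (blk p j)) \<le> jnorm x"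
proof -
  let ?b = "\<lambda>j. isum x (blk p j)"
  have *: "fval ?b F \<le> (jnorm x)^2" if F: "adm_intervals F" for F
  proof -
    let ?G = "\<lambda>J. {p (Min J)..<p (Suc (Max J))}"
    have MM: "Min {s..t} = s" "Max {s..t} = t" if "s \<le> t" for s t :: nat
      using that by (auto intro!: Min_eqI Max_eqI)
    have "fval ?b F = (\<Sum>J\<in>F. (isum x (?G J))^2)"
      unfolding fval_def
    proof (rule sum.cong[OF refl])
      fix J assume "J \<in> F"
      then obtain s t where st: "s \<le> t" "J = {s..t}" using adm_elem[OF F] by blast
      show "(isum ?b J)^2 = (isum x (?G J))^2" using isum_bsum[OF assms(1) st(1)] st MM[OF st(1)] by simp
    qed
    also have "\<dots> \<le> (jnorm x)^2"
    proof (rule fam_image[OF assms(2) F])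
      show "\<forall>J\<in>F. ivl (?G J)"
        using cvx_ivl[OF _ cvx_atLeastLessThan] by blast
      show "\<forall>J\<in>F. \<forall>J'\<in>F. J \<noteq> J' \<longrightarrow> ?G J \<inter> ?G J' = {}"
      proof (intro ballI impI)
        fix J J' assume J: "J \<in> F" and J': "J' \<in> F" and ne: "J \<noteq> J'"
        obtain s t where st: "s \<le> t" "J = {s..t}" using adm_elem[OF F J] by blast
        obtain s' t' where st': "s' \<le> t'" "J' = {s'..t'}" using adm_elem[OF F J'] by blast
        have dj: "J \<inter> J' = {}" by (rule adm_disj[OF F J J' ne])
        have "t < s' \<or> t' < s"
        proof (rule ccontr)
          assume "\<not> (t < s' \<or> t' < s)"
          hence "max s s' \<in> J" "max s s' \<in> J'" using st st' by auto
          thus False using dj by blast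
        qed
        thus "?G J \<inter> ?G J' = {}"
        proof
          assume "t < s'"
          hence "p (Suc t) \<le> p s'" using assms(1) by (simp add: strict_mono_less_eq)
          thus ?thesis using st st' MM[OF st(1)] MM[OF st'(1)] by auto
        next
          assume "t' < s"
          hence "p (Suc t') \<le> p s" using assms(1) by (simp add: strict_mono_less_eq)
          thus ?thesis using st st' MM[OF st(1)] MM[OF st'(1)] by auto
        qed
      qed
    qed
    finally show ?thesis .
  qed
  show "?b \<in> James" using James_I * by blast
  show "jnorm ?b \<le> jnorm x" using jnorm_le[OF *] jnorm_nonneg by blast
qed

text \<open>Upper block estimate\<close>

lemma sq_add_le: "(x + y)^2 \<le> 2 * x^2 + 2 * (y::real)^2"
proof -
  have "0 \<le> (x - y)^2" by simp
  thus ?thesis by (simp add: power2_eq_square algebra_simps)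
qed

lemma sq_sum_le_card: "(\<Sum>i\<in>A. f i)^2 \<le> real (card A) * (\<Sum>i\<in>A. (f i)^2)" for f :: "nat \<Rightarrow> real"
  using sum_squared_le_sum_of_squares[of f A] by (simp add: mult.commute)

lemma part_card:
  assumes "strict_mono p" "a \<le> b"
  shows "card {i. i < N \<and> blk p i \<inter> {a..b} \<noteq> {} \<and> \<not> blk p i \<subseteq> {a..b}} \<le> 2"
proof -
  let ?P = "{i. i < N \<and> blk p i \<inter> {a..b} \<noteq> {} \<and> \<not> blk p i \<subseteq> {a..b}}"
  have sub: "?P \<subseteq> {i. i < N \<and> a \<in> blk p i} \<union> {i. i < N \<and> b \<in> blk p i}"
  proof
    fix i assume "i \<in> ?P"
    hence i: "i < N" "blk p i \<inter> {a..b} \<noteq> {}" "\<not> blk p i \<subseteq> {a..b}" by auto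
    obtain k where k: "k \<in> blk p i" "a \<le> k" "k \<le> b" using i(2) by auto
    from i(3) obtain k' where k'0: "k' \<in> blk p i" "k' \<notin> {a..b}" by blast
    hence k': "k' \<in> blk p i" "k' < a \<or> b < k'" by auto
    have "a \<in> blk p i \<or> b \<in> blk p i"
      using k k' unfolding blk_def by auto
    thus "i \<in> {i. i < N \<and> a \<in> blk p i} \<union> {i. i < N \<and> b \<in> blk p i}" using i(1) by auto
  qed
  have c1: "card {i. i < N \<and> m \<in> blk p i} \<le> 1" for m
  proof -
    have "card {i. i < N \<and> m \<in> blk p i} \<le> Suc 0"
      by (subst card_le_Suc0_iff_eq) (auto intro: blk_disj[OF assms(1)])
    thus ?thesis by simp
  qed
  have "card ?P \<le> card ({i. i < N \<and> a \<in> blk p i} \<union> {i. i < N \<and> b \<in> blk p i})"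
    by (rule card_mono[OF _ sub]) simp
  also have "\<dots> \<le> card {i. i < N \<and> a \<in> blk p i} + card {i. i < N \<and> b \<in> blk p i}"
    by (rule card_Un_le)
  also have "\<dots> \<le> 2" using c1[of a] c1[of b] by simp
  finally show ?thesis .
qed

lemma upper_block:
  fixes u :: "nat \<Rightarrow> nat \<Rightarrow> real" and a :: "nat \<Rightarrow> real" and N :: nat
  assumes p: "strict_mono p"
    and uJ: "\<And>i. u i \<in> James"
    and supp: "\<And>i k. k \<notin> blk p i \<Longrightarrow> u i k = 0"
  defines "w \<equiv> (\<lambda>k. \<Sum>i<N. a i * u i k)"
  defines "lam \<equiv> (\<lambda>i. isum (u i) (blk p i))"
  shows "w \<in> James" "(jnorm w)^2 \<le> 2 * (jnorm (tr N (\<lambda>i. a i * lam i)))^2 + 4 * (\<Sum>i<N. (a i)^2 * (jnorm (u i))^2)"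
proof -
  let ?c = "tr N (\<lambda>i. a i * lam i)"
  let ?Full = "\<lambda>I. {i. i < N \<and> blk p i \<subseteq> I}"
  let ?Part = "\<lambda>I. {i. i < N \<and> blk p i \<inter> I \<noteq> {} \<and> \<not> blk p i \<subseteq> I}"
  have isum_I: "isum (u i) I = isum (u i) (I \<inter> blk p i)" if "finite I" for i I
    unfolding isum_def using that supp by (intro sum.mono_neutral_right) auto
  have isum_full: "isum (u i) I = lam i" if "finite I" "blk p i \<subseteq> I" for i I
  proof -
    have "I \<inter> blk p i = blk p i" using that(2) by auto
    thus ?thesis using isum_I[OF that(1)] unfolding lam_def by simp
  qed
  have isum_zero: "isum (u i) I = 0" if "finite I" "blk p i \<inter> I = {}" for i I
  proof -
    have "I \<inter> blk p i = {}" using that(2) by auto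
    thus ?thesis using isum_I[OF that(1)] by (simp add: isum_def)
  qed
  have key: "(isum w I)^2 \<le> 2 * (isum ?c (?Full I))^2 + 4 * (\<Sum>i<N. (a i)^2 * (isum (u i) I)^2)"
    if I: "a0 \<le> b0" "I = {a0..b0}" for I a0 b0
  proof -
    have fI: "finite I" using I by simp
    have "isum w I = (\<Sum>i<N. a i * isum (u i) I)"
      unfolding w_def isum_def by (simp add: sum_distrib_left sum.swap[of _ I])
    also have "\<dots> = (\<Sum>i\<in>?Full I. a i * lam i) + (\<Sum>i\<in>?Part I. a i * isum (u i) I)"
    proof -
      have split: "{..<N} = ?Full I \<union> ?Part I \<union> {i. i < N \<and> blk p i \<inter> I = {}}" by auto
      have "(\<Sum>i<N. a i * isum (u i) I) = (\<Sum>i\<in>?Full I \<union> ?Part I \<union> {i. i < N \<and> blk p i \<inter> I = {}}. a i * isum (u i) I)"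
        using split by simp
      also have "\<dots> = (\<Sum>i\<in>?Full I. a i * isum (u i) I) + (\<Sum>i\<in>?Part I. a i * isum (u i) I)
            + (\<Sum>i\<in>{i. i < N \<and> blk p i \<inter> I = {}}. a i * isum (u i) I)"
      proof -
        have "(?Full I \<union> ?Part I) \<inter> {i. i < N \<and> blk p i \<inter> I = {}} = {}"
        proof (rule ccontr)
          assume "(?Full I \<union> ?Part I) \<inter> {i. i < N \<and> blk p i \<inter> I = {}} \<noteq> {}"
          then obtain i where "blk p i \<subseteq> I" "blk p i \<inter> I = {}" by blast
          thus False using blk_ne[OF p, of i] by blast
        qed
        hence "(\<Sum>i\<in>?Full I \<union> ?Part I \<union> {i. i < N \<and> blk p i \<inter> I = {}}. a i * isum (u i) I)
          = (\<Sum>i\<in>?Full I \<union> ?Part I. a i * isum (u i) I) + (\<Sum>i\<in>{i. i < N \<and> blk p i \<inter> I = {}}. a i * isum (u i) I)"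
          by (intro sum.union_disjoint) auto
        moreover have "(\<Sum>i\<in>?Full I \<union> ?Part I. a i * isum (u i) I) = (\<Sum>i\<in>?Full I. a i * isum (u i) I) + (\<Sum>i\<in>?Part I. a i * isum (u i) I)"
          by (intro sum.union_disjoint) auto
        ultimately show ?thesis by simp
      qed
      also have "(\<Sum>i\<in>{i. i < N \<and> blk p i \<inter> I = {}}. a i * isum (u i) I) = 0"
      proof (intro sum.neutral ballI)
        fix i assume "i \<in> {i. i < N \<and> blk p i \<inter> I = {}}"
        hence d: "blk p i \<inter> I = {}" by simp
        have "\<not> blk p i \<subseteq> I" using d blk_ne[OF p, of i] by blast
        thus "a i * isum (u i) I = 0" using isum_zero[OF fI d] by simp
      qed
      also have "(\<Sum>i\<in>?Full I. a i * isum (u i) I) = (\<Sum>i\<in>?Full I. a i * lam i)"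
        using isum_full[OF fI] by (intro sum.cong) auto
      finally show ?thesis by simp
    qed
    finally have eq: "isum w I = (\<Sum>i\<in>?Full I. a i * lam i) + (\<Sum>i\<in>?Part I. a i * isum (u i) I)" .
    have c_eq: "isum ?c (?Full I) = (\<Sum>i\<in>?Full I. a i * lam i)"
      unfolding isum_def tr_def by (intro sum.cong) auto
    have "(\<Sum>i\<in>?Part I. a i * isum (u i) I)^2 \<le> real (card (?Part I)) * (\<Sum>i\<in>?Part I. (a i * isum (u i) I)^2)"
      by (rule sq_sum_le_card)
    also have "\<dots> \<le> 2 * (\<Sum>i\<in>?Part I. (a i * isum (u i) I)^2)"
      using part_card[OF p I(1), of N] I(2) by (intro mult_right_mono) (auto simp: sum_nonneg)
    also have "\<dots> \<le> 2 * (\<Sum>i<N. (a i)^2 * (isum (u i) I)^2)"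
    proof -
      have "(\<Sum>i\<in>?Part I. (a i * isum (u i) I)^2) = (\<Sum>i\<in>?Part I. (a i)^2 * (isum (u i) I)^2)"
        by (simp add: power_mult_distrib)
      also have "\<dots> \<le> (\<Sum>i<N. (a i)^2 * (isum (u i) I)^2)"
        by (rule sum_mono2) auto
      finally show ?thesis by simp
    qed
    finally have pb: "(\<Sum>i\<in>?Part I. a i * isum (u i) I)^2 \<le> 2 * (\<Sum>i<N. (a i)^2 * (isum (u i) I)^2)" .
    have "(isum w I)^2 \<le> 2 * (\<Sum>i\<in>?Full I. a i * lam i)^2 + 2 * (\<Sum>i\<in>?Part I. a i * isum (u i) I)^2"
      unfolding eq by (rule sq_add_le) 
    thus ?thesis using pb c_eq by simp
  qed
  have *: "fval w F \<le> 2 * (jnorm ?c)^2 + 4 * (\<Sum>i<N. (a i)^2 * (jnorm (u i))^2)"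
    if F: "adm_intervals F" for F
  proof -
    have "fval w F \<le> (\<Sum>I\<in>F. 2 * (isum ?c (?Full I))^2 + 4 * (\<Sum>i<N. (a i)^2 * (isum (u i) I)^2))"
      unfolding fval_def
    proof (rule sum_mono)
      fix I assume "I \<in> F"
      then obtain a0 b0 where "a0 \<le> b0" "I = {a0..b0}" using adm_elem[OF F] by blast
      thus "(isum w I)^2 \<le> 2 * (isum ?c (?Full I))^2 + 4 * (\<Sum>i<N. (a i)^2 * (isum (u i) I)^2)"
        by (rule key)
    qed
    also have "\<dots> = 2 * (\<Sum>I\<in>F. (isum ?c (?Full I))^2) + 4 * (\<Sum>i<N. (a i)^2 * fval (u i) F)"
      by (simp add: sum.distrib sum_distrib_left fval_def sum.swap[of _ F])
    also have "\<dots> \<le> 2 * (jnorm ?c)^2 + 4 * (\<Sum>i<N. (a i)^2 * (jnorm (u i))^2)"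
    proof -
      have A: "(\<Sum>I\<in>F. (isum ?c (?Full I))^2) \<le> (jnorm ?c)^2"
      proof (rule fam_image[OF tr_James F])
        show "\<forall>I\<in>F. ivl (?Full I)"
        proof
          fix I assume "I \<in> F"
          then obtain a0 b0 where ab: "a0 \<le> b0" "I = {a0..b0}" using adm_elem[OF F] by blast
          show "ivl (?Full I)"
          proof (rule cvx_ivl)
            show "finite (?Full I)" by simp
            show "cvx (?Full I)" unfolding cvx_def
            proof (intro allI impI)
              fix x y z assume xyz: "x \<in> ?Full I" "z \<in> ?Full I" "x \<le> y" "y \<le> z"
              have pxy: "p x \<le> p y" "p (Suc y) \<le> p (Suc z)" using xyz(3,4) p by (auto simp: strict_mono_less_eq)
              have a0x: "a0 \<le> p x" using xyz(1) blk_ne[OF p, of x] ab by auto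
              have pzb: "p z \<le> b0" using xyz(2) blk_ne[OF p, of z] ab by auto
              have "blk p y \<subseteq> I"
              proof
                fix k assume k: "k \<in> blk p y"
                hence k1: "p y \<le> k" "k < p (Suc y)" by (auto simp: blk_def)
                have "k \<le> b0"
                proof (cases "p z \<le> k")
                  case True
                  hence "k \<in> blk p z" using k1 pxy by (simp add: blk_def)
                  thus ?thesis using xyz(2) ab by auto
                next
                  case False thus ?thesis using pzb by simp
                qed
                thus "k \<in> I" using ab a0x pxy k1 by simp
              qed
              thus "y \<in> ?Full I" using xyz by simp
            qed
          qed
        qed
        show "\<forall>I\<in>F. \<forall>I'\<in>F. I \<noteq> I' \<longrightarrow> ?Full I \<inter> ?Full I' = {}"
        proof (intro ballI impI)
          fix I I' assume "I \<in> F" "I' \<in> F" "I \<noteq> I'"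
          hence dj: "I \<inter> I' = {}" by (rule adm_disj[OF F])
          show "?Full I \<inter> ?Full I' = {}"
          proof (rule ccontr)
            assume "?Full I \<inter> ?Full I' \<noteq> {}"
            then obtain i where "blk p i \<subseteq> I" "blk p i \<subseteq> I'" by blast
            thus False using dj blk_ne[OF p, of i] by blast
          qed
        qed
      qed
      have B: "(\<Sum>i<N. (a i)^2 * fval (u i) F) \<le> (\<Sum>i<N. (a i)^2 * (jnorm (u i))^2)"
        by (intro sum_mono mult_left_mono fval_le[OF uJ F]) simp
      show ?thesis using A B by linarith
    qed
    finally show ?thesis .
  qed
  show "w \<in> James" using James_I * by blast
  have "0 \<le> 2 * (jnorm ?c)^2 + 4 * (\<Sum>i<N. (a i)^2 * (jnorm (u i))^2)"
    by (simp add: sum_nonneg)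
  hence "jnorm w \<le> sqrt (2 * (jnorm ?c)^2 + 4 * (\<Sum>i<N. (a i)^2 * (jnorm (u i))^2))"
    using * by (intro jnorm_le) simp_all
  thus "(jnorm w)^2 \<le> 2 * (jnorm ?c)^2 + 4 * (\<Sum>i<N. (a i)^2 * (jnorm (u i))^2)"
    using power_mono[OF _ jnorm_nonneg, of w "sqrt (2 * (jnorm ?c)^2 + 4 * (\<Sum>i<N. (a i)^2 * (jnorm (u i))^2))" 2]
      real_sqrt_pow2[OF \<open>0 \<le> _\<close>] by simp
qed

lemma R_James': "cvx A \<Longrightarrow> R A (Rep_jam x) \<in> James"
  using R_James(1)[OF Rep_James] by blast

definition Rj :: "nat set \<Rightarrow> jam \<Rightarrow> jam" where
  "Rj A x = Abs_jam (R A (Rep_jam x))"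

lemma Rep_Rj: "cvx A \<Longrightarrow> Rep_jam (Rj A x) = R A (Rep_jam x)"
  unfolding Rj_def by (simp add: Abs_jam_inverse R_James')

lemma norm_Rj: "cvx A \<Longrightarrow> norm (Rj A x) \<le> norm x"
  using R_James(2)[OF Rep_James] by (simp add: norm_Rep Rep_Rj)

lemma Rj_add: "cvx A \<Longrightarrow> Rj A (x + y) = Rj A x + Rj A y"
  by (rule jam_eqI) (simp add: Rep_Rj R_def)
lemma Rj_scaleR: "cvx A \<Longrightarrow> Rj A (c *\<^sub>R x) = c *\<^sub>R Rj A x"
  by (rule jam_eqI) (simp add: Rep_Rj R_def)
lemma Rj_diff: "cvx A \<Longrightarrow> Rj A (x - y) = Rj A x - Rj A y"
  by (rule jam_eqI) (simp add: Rep_Rj R_def)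

lemma tail_small_jam: "0 < e \<Longrightarrow> \<exists>p. \<forall>q\<ge>p. norm (Rj {q..} x) \<le> e"
  using tail_small[OF Rep_James, of e x] by (simp add: norm_Rep Rep_Rj cvx_atLeast)

lemma bl_coord: "bounded_linear (\<lambda>x. Rep_jam x k)"
  by (rule bounded_linear_intro[where K=1]) (auto simp: coord_le_norm)

text \<open>Limit functional\<close>

definition Lf :: "jam \<Rightarrow> real" where
  "Lf x = lim (\<lambda>N. \<Sum>k<N. Rep_jam x k)"

lemma partial_le_norm: "\<bar>\<Sum>k<N. Rep_jam x k\<bar> \<le> norm x"
proof (cases N)
  case 0 thus ?thesis by simp
next
  case (Suc M)
  have "(\<Sum>k<N. Rep_jam x k) = isum (Rep_jam x) {0..M}"
    unfolding isum_def Suc by (simp add: lessThan_Suc_atMost atLeast0AtMost)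
  thus ?thesis using isum_le_norm[of 0 M x] by simp
qed

lemma seg_le_tail: "m \<le> n \<Longrightarrow> \<bar>\<Sum>k\<in>{m..<n}. Rep_jam x k\<bar> \<le> norm (Rj {m..} x)"
proof (cases "m < n")
  case True
  have "(\<Sum>k\<in>{m..<n}. Rep_jam x k) = isum (Rep_jam (Rj {m..} x)) {m..n - 1}"
    unfolding isum_def using True by (intro sum.cong) (auto simp: Rep_Rj cvx_atLeast R_def)
  thus ?thesis using isum_le_norm[of m "n - 1" "Rj {m..} x"] True by simp
next
  case False thus "m \<le> n \<Longrightarrow> ?thesis" by simp
qed

lemma partial_Cauchy: "Cauchy (\<lambda>N. \<Sum>k<N. Rep_jam x k)"
proof (rule metric_CauchyI)
  fix e :: real assume "0 < e"
  obtain p where p: "\<forall>q\<ge>p. norm (Rj {q..} x) \<le> e/2" using tail_small_jam[of "e/2" x] \<open>0 < e\<close> by auto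
  show "\<exists>M. \<forall>m\<ge>M. \<forall>n\<ge>M. dist (\<Sum>k<m. Rep_jam x k) (\<Sum>k<n. Rep_jam x k) < e"
  proof (intro exI allI impI)
    fix m n assume "p \<le> m" "p \<le> n"
    have d: "\<bar>(\<Sum>k<m. Rep_jam x k) - (\<Sum>k<n. Rep_jam x k)\<bar> \<le> e/2" if "p \<le> m" "m \<le> n" for m n
    proof -
      have "(\<Sum>k<n. Rep_jam x k) = (\<Sum>k<m. Rep_jam x k) + (\<Sum>k\<in>{m..<n}. Rep_jam x k)"
        using sum.atLeastLessThan_concat[of 0 m n "\<lambda>k. Rep_jam x k"] that(2) by (simp add: atLeast0LessThan)
      thus ?thesis using seg_le_tail[OF that(2), of x] p that(1) by auto
    qed
    show "dist (\<Sum>k<m. Rep_jam x k) (\<Sum>k<n. Rep_jam x k) < e"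
    proof (cases "m \<le> n")
      case True thus ?thesis using d[OF \<open>p \<le> m\<close> True] \<open>0 < e\<close> by (simp add: dist_real_def)
    next
      case False thus ?thesis using d[OF \<open>p \<le> n\<close>, of m] \<open>0 < e\<close> by (simp add: dist_real_def abs_minus_commute)
    qed
  qed
qed

lemma Lf_tendsto: "(\<lambda>N. \<Sum>k<N. Rep_jam x k) \<longlonglongrightarrow> Lf x"
  unfolding Lf_def using partial_Cauchy Cauchy_convergent_iff convergent_LIMSEQ_iff by blast

lemma bl_Lf: "bounded_linear Lf"
proof (rule bounded_linear_intro[where K=1])
  fix x y :: jam and r :: real
  have "(\<lambda>N. \<Sum>k<N. Rep_jam (x + y) k) \<longlonglongrightarrow> Lf x + Lf y"
    by (simp add: sum.distrib) (intro tendsto_add Lf_tendsto)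
  thus "Lf (x + y) = Lf x + Lf y" using Lf_tendsto[of "x + y"] LIMSEQ_unique by blast
  have "(\<lambda>N. \<Sum>k<N. Rep_jam (r *\<^sub>R x) k) \<longlonglongrightarrow> r * Lf x"
    by (simp add: sum_distrib_left[symmetric]) (intro tendsto_mult_left Lf_tendsto)
  thus "Lf (r *\<^sub>R x) = r *\<^sub>R Lf x" using Lf_tendsto[of "r *\<^sub>R x"] LIMSEQ_unique by auto
  have "(\<lambda>N. \<bar>\<Sum>k<N. Rep_jam x k\<bar>) \<longlonglongrightarrow> \<bar>Lf x\<bar>" by (intro tendsto_rabs Lf_tendsto)
  hence "\<bar>Lf x\<bar> \<le> norm x" by (rule tendsto_upperbound) (auto simp: partial_le_norm)
  thus "norm (Lf x) \<le> norm x * 1" by simp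
qed

lemma Lf_le: "\<bar>Lf x\<bar> \<le> norm x"
proof -
  have "(\<lambda>N. \<bar>\<Sum>k<N. Rep_jam x k\<bar>) \<longlonglongrightarrow> \<bar>Lf x\<bar>" by (intro tendsto_rabs Lf_tendsto)
  thus "\<bar>Lf x\<bar> \<le> norm x" by (rule tendsto_upperbound) (auto simp: partial_le_norm)
qed

lemma Lf_finsupp:
  assumes "\<And>k. k \<ge> M \<Longrightarrow> Rep_jam x k = 0"
  shows "Lf x = (\<Sum>k<M. Rep_jam x k)"
proof -
  have "\<forall>\<^sub>F N in sequentially. (\<Sum>k<N. Rep_jam x k) = (\<Sum>k<M. Rep_jam x k)"
  proof (rule eventually_sequentiallyI[of M])
    fix N assume "M \<le> N"
    show "(\<Sum>k<N. Rep_jam x k) = (\<Sum>k<M. Rep_jam x k)"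
      using \<open>M \<le> N\<close> assms by (intro sum.mono_neutral_right) auto
  qed
  hence "(\<lambda>N. \<Sum>k<N. Rep_jam x k) \<longlonglongrightarrow> (\<Sum>k<M. Rep_jam x k)"
    by (rule tendsto_eventually)
  thus ?thesis using Lf_tendsto LIMSEQ_unique by blast
qed

lemma Lf_blk:
  assumes "strict_mono p"
  shows "Lf (Rj (blk p j) x) = isum (Rep_jam x) (blk p j)"
proof -
  have cb: "cvx (blk p j)" by (simp add: blk_def cvx_atLeastLessThan)
  have "Lf (Rj (blk p j) x) = (\<Sum>k<p (Suc j). Rep_jam (Rj (blk p j) x) k)"
    by (rule Lf_finsupp) (use Rep_Rj[OF cb] in \<open>simp add: R_def blk_def\<close>)
  also have "\<dots> = (\<Sum>k\<in>blk p j. Rep_jam x k)"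
    by (rule sum.mono_neutral_cong_right) (use Rep_Rj[OF cb] in \<open>auto simp: R_def blk_def\<close>)
  finally show ?thesis by (simp add: isum_def)
qed

text \<open>Norming functionals\<close>

lemma norming:
  fixes x :: jam
  shows "\<exists>g. bounded_linear g \<and> (\<forall>y. \<bar>g y\<bar> \<le> norm y) \<and> norm x \<le> 2 * g x"
proof (cases "x = 0")
  case True
  show ?thesis by (rule exI[of _ "\<lambda>y. 0"]) (simp add: True)
next
  case False
  hence nx: "0 < norm x" by simp
  obtain F where F: "adm_intervals F" "(jnorm (Rep_jam x))^2 - 3/4 * (norm x)^2 < fval (Rep_jam x) F"
    using exists_near_sup[OF Rep_James, of "3/4 * (norm x)^2" x] nx by auto
  define v where "v = fval (Rep_jam x) F"
  have v: "(norm x)^2 / 4 < v" using F(2) unfolding v_def norm_Rep by simp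
  hence vpos: "0 < v" using nx by (smt (verit) zero_less_power divide_pos_pos)
  define t where "t I = isum (Rep_jam x) I / sqrt v" for I
  define g where "g y = (\<Sum>I\<in>F. t I * isum (Rep_jam y) I)" for y
  have gy: "\<bar>g y\<bar> \<le> norm y" for y
  proof -
    have "(g y)^2 \<le> (\<Sum>I\<in>F. (t I)^2) * (\<Sum>I\<in>F. (isum (Rep_jam y) I)^2)"
      unfolding g_def by (rule Cauchy_Schwarz_ineq_sum)
    also have "(\<Sum>I\<in>F. (t I)^2) = 1"
      unfolding t_def using vpos by (simp add: power_divide sum_divide_distrib[symmetric] v_def fval_def)
    finally have "(g y)^2 \<le> fval (Rep_jam y) F" by (simp add: fval_def)
    hence "sqrt ((g y)^2) \<le> sqrt (fval (Rep_jam y) F)" by (rule real_sqrt_le_mono)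
    hence "\<bar>g y\<bar> \<le> sqrt (fval (Rep_jam y) F)" by simp
    also have "\<dots> \<le> norm y" by (rule fval_le_norm[OF F(1)])
    finally show ?thesis .
  qed
  have lin: "bounded_linear g"
  proof (rule bounded_linear_intro[where K=1])
    fix y z :: jam and r :: real
    show "g (y + z) = g y + g z"
      unfolding g_def by (simp add: Rep_add isum_add distrib_left sum.distrib)
    show "g (r *\<^sub>R y) = r *\<^sub>R g y"
      unfolding g_def by (simp add: Rep_scaleR isum_scale sum_distrib_left mult.left_commute)
    show "norm (g y) \<le> norm y * 1" using gy by simp
  qed
  have "g x = v / sqrt v"
    unfolding g_def t_def v_def fval_def by (simp add: sum_divide_distrib power2_eq_square)
  also have "\<dots> = sqrt v" using vpos by (simp add: real_div_sqrt)
  finally have gx: "g x = sqrt v" .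
  have "norm x / 2 \<le> sqrt v"
  proof (rule real_le_rsqrt)
    show "(norm x / 2)^2 \<le> v" using v by (simp add: power_divide)
  qed
  hence "norm x \<le> 2 * g x" using gx by simp
  thus ?thesis using lin gy by blast
qed

lemma bl_jdual: assumes "bounded_linear g" shows "(\<lambda>z. g (Abs_jam z)) \<in> jdual"
proof -
  obtain K where K: "\<And>x. norm (g x) \<le> norm x * K" using bounded_linear.bounded[OF assms] by blast
  have add: "Abs_jam (\<lambda>i. x i + y i) = Abs_jam x + Abs_jam y" if "x \<in> James" "y \<in> James" for x y
    by (rule jam_eqI) (simp add: Abs_jam_inverse that James_add(1))
  have sc: "Abs_jam (\<lambda>i. c * x i) = c *\<^sub>R Abs_jam x" if "x \<in> James" for c x
    by (rule jam_eqI) (simp add: Abs_jam_inverse that James_scale_le(1))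
  show ?thesis unfolding jdual_def
  proof (intro CollectI conjI ballI allI exI)
    fix x y assume "x \<in> James" "y \<in> James"
    thus "g (Abs_jam (\<lambda>i. x i + y i)) = g (Abs_jam x) + g (Abs_jam y)"
      using add linear_add[OF bounded_linear.linear[OF assms]] by simp
  next
    fix c x assume "x \<in> James"
    thus "g (Abs_jam (\<lambda>i. c * x i)) = c * g (Abs_jam x)"
      using sc linear_scale[OF bounded_linear.linear[OF assms]] by simp
  next
    fix x assume "x \<in> James"
    thus "\<bar>g (Abs_jam x)\<bar> \<le> K * jnorm x"
      using K[of "Abs_jam x"] by (simp add: norm_Rep Abs_jam_inverse mult.commute)
  qed
qed

lemma jdual_bl: assumes "f \<in> jdual" shows "bounded_linear (\<lambda>x. f (Rep_jam x))"
proof -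
  from assms obtain C where C: "\<forall>x\<in>James. \<bar>f x\<bar> \<le> C * jnorm x" unfolding jdual_def by blast
  show ?thesis
  proof (rule bounded_linear_intro[where K=C])
    fix x y :: jam and r :: real
    show "f (Rep_jam (x + y)) = f (Rep_jam x) + f (Rep_jam y)"
      using assms Rep_James unfolding jdual_def Rep_add by blast
    show "f (Rep_jam (r *\<^sub>R x)) = r *\<^sub>R f (Rep_jam x)"
      using assms Rep_James unfolding jdual_def Rep_scaleR by simp
    show "norm (f (Rep_jam x)) \<le> norm x * C"
      using C Rep_James[of x] by (simp add: norm_Rep mult.commute)
  qed
qed

lemma geo4: "(\<lambda>i. (1/4::real)^i) sums (4/3)"
  using geometric_sums[of "1/4::real"] by simp

lemma geo4_shift: "(\<lambda>i. (1/4::real)^(i + k)) sums ((1/4)^k * (4/3))"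
proof -
  have "(\<lambda>i. (1/4::real)^k * (1/4)^i) sums ((1/4)^k * (4/3))" by (rule sums_mult[OF geo4])
  thus ?thesis by (simp add: power_add mult.commute)
qed

lemma series_bound:
  fixes G :: "nat \<Rightarrow> jam \<Rightarrow> real"
  assumes "\<And>i y. \<bar>G i y\<bar> \<le> norm y"
  shows "summable (\<lambda>i. (1/4)^(i + k) * G (i + k) y)"
    "\<bar>\<Sum>i. (1/4)^(i + k) * G (i + k) y\<bar> \<le> (1/4)^k * (4/3) * norm y"
proof -
  have s: "(\<lambda>i. (1/4::real)^(i + k) * norm y) sums ((1/4)^k * (4/3) * norm y)"
    using sums_mult2[OF geo4_shift[of k], of "norm y"] by simp
  have b: "\<bar>(1/4)^(i + k) * G (i + k) y\<bar> \<le> (1/4)^(i + k) * norm y" for i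
    using assms[of "i + k" y] by (simp add: abs_mult mult_left_mono)
  have b1: "(1/4)^(i + k) * G (i + k) y \<le> (1/4)^(i + k) * norm y" for i
    using b[of i] by (simp add: abs_le_iff)
  have b2: "- ((1/4)^(i + k) * norm y) \<le> (1/4)^(i + k) * G (i + k) y" for i
    using b[of i] by (simp only: abs_le_iff) linarith
  show sm: "summable (\<lambda>i. (1/4)^(i + k) * G (i + k) y)"
    by (rule summable_comparison_test'[OF sums_summable[OF s]]) (use b in simp)
  have "(\<Sum>i. (1/4)^(i + k) * G (i + k) y) \<le> (\<Sum>i. (1/4::real)^(i + k) * norm y)"
    by (rule suminf_le[OF b1 sm sums_summable[OF s]])
  moreover have "- (\<Sum>i. (1/4::real)^(i + k) * norm y) \<le> (\<Sum>i. (1/4)^(i + k) * G (i + k) y)"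
  proof -
    have "(\<Sum>i. - ((1/4::real)^(i + k) * norm y)) \<le> (\<Sum>i. (1/4)^(i + k) * G (i + k) y)"
      by (rule suminf_le[OF b2 summable_minus[OF sums_summable[OF s]] sm])
    thus ?thesis using suminf_minus[OF sums_summable[OF s]] by simp
  qed
  ultimately show "\<bar>\<Sum>i. (1/4)^(i + k) * G (i + k) y\<bar> \<le> (1/4)^k * (4/3) * norm y"
    using sums_unique[OF s] by (simp add: abs_le_iff)
qed

lemma series_bl:
  fixes G :: "nat \<Rightarrow> jam \<Rightarrow> real"
  assumes "\<And>i. bounded_linear (G i)" "\<And>i y. \<bar>G i y\<bar> \<le> norm y"
  shows "bounded_linear (\<lambda>y. \<Sum>i. (1/4)^i * G i y)"
proof (rule bounded_linear_intro[where K="4/3"])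
  have sm: "summable (\<lambda>i. (1/4)^i * G i y)" for y using series_bound(1)[OF assms(2), where k=0 and y=y] by simp
  fix x y :: jam and r :: real
  have "(\<Sum>i. (1/4)^i * G i (x + y)) = (\<Sum>i. (1/4)^i * G i x + (1/4)^i * G i y)"
    by (simp add: linear_add[OF bounded_linear.linear[OF assms(1)]] distrib_left)
  also have "\<dots> = (\<Sum>i. (1/4)^i * G i x) + (\<Sum>i. (1/4)^i * G i y)"
    by (rule suminf_add[OF sm sm, symmetric])
  finally show "(\<Sum>i. (1/4)^i * G i (x + y)) = (\<Sum>i. (1/4)^i * G i x) + (\<Sum>i. (1/4)^i * G i y)" .
  have "(\<Sum>i. (1/4)^i * G i (r *\<^sub>R x)) = (\<Sum>i. r * ((1/4)^i * G i x))"
    by (simp add: linear_scale[OF bounded_linear.linear[OF assms(1)]] mult.left_commute)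
  also have "\<dots> = r * (\<Sum>i. (1/4)^i * G i x)" by (rule suminf_mult[OF sm])
  finally show "(\<Sum>i. (1/4)^i * G i (r *\<^sub>R x)) = r *\<^sub>R (\<Sum>i. (1/4)^i * G i x)" by simp
  show "norm (\<Sum>i. (1/4)^i * G i x) \<le> norm x * (4/3)"
    using series_bound(2)[OF assms(2), where k=0 and y=x] by (simp add: mult.commute)
qed

lemma ubp:
  fixes X :: "nat \<Rightarrow> jam"
  assumes conv: "\<And>g::jam \<Rightarrow> real. bounded_linear g \<Longrightarrow> convergent (\<lambda>n. g (X n))"
  shows "\<exists>M. \<forall>n. norm (X n) \<le> M"
proof (rule ccontr)
  assume "\<not> ?thesis"
  hence unb: "\<exists>n. M < norm (X n)" for M by (meson not_le)
  define gsel where "gsel x = (SOME g. bounded_linear g \<and> (\<forall>y. \<bar>g y\<bar> \<le> norm y) \<and> norm x \<le> 2 * g x)" for x :: jam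
  have gsel: "bounded_linear (gsel x)" "\<And>y. \<bar>gsel x y\<bar> \<le> norm y" "norm x \<le> 2 * gsel x x" for x
    using someI_ex[OF norming[of x]] unfolding gsel_def by blast+
  define bnd where "bnd h = (SOME B. \<forall>n. \<bar>h (X n)\<bar> \<le> B)" for h :: "jam \<Rightarrow> real"
  define nsel where "nsel j h = (SOME n. 6 * 4^j * (bnd h + real j) < norm (X n))" for j and h :: "jam \<Rightarrow> real"
  have nsel: "6 * 4^j * (bnd h + real j) < norm (X (nsel j h))" for j h
    using someI_ex[OF unb] unfolding nsel_def by blast
  define hd where "hd = rec_nat (\<lambda>y. 0) (\<lambda>j h. (\<lambda>y. h y + (1/4)^j * gsel (X (nsel j h)) y))"
  have hd0: "hd 0 = (\<lambda>y. 0)" unfolding hd_def by simp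
  have hdS: "hd (Suc j) = (\<lambda>y. hd j y + (1/4)^j * gsel (X (nsel j (hd j))) y)" for j
    unfolding hd_def by simp
  define G where "G j = gsel (X (nsel j (hd j)))" for j
  define n where "n j = nsel j (hd j)" for j
  have hd_eq: "hd j = (\<lambda>y. \<Sum>i<j. (1/4)^i * G i y)" for j
    by (induction j) (simp_all add: hd0 hdS G_def)
  have Gb: "bounded_linear (G i)" "\<And>y. \<bar>G i y\<bar> \<le> norm y" for i
    unfolding G_def using gsel by auto
  have hd_bl: "bounded_linear (hd j)" for j
    unfolding hd_eq by (intro bounded_linear_sum bounded_linear_const_mult Gb)
  have bnd: "\<bar>hd j (X m)\<bar> \<le> bnd (hd j)" for j m
  proof -
    have "Bseq (\<lambda>m. hd j (X m))" by (rule convergent_imp_Bseq[OF conv[OF hd_bl]])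
    then obtain K where "\<forall>m. norm (hd j (X m)) \<le> K" unfolding Bseq_def by blast
    hence "\<exists>B. \<forall>m. \<bar>hd j (X m)\<bar> \<le> B" by auto
    thus ?thesis unfolding bnd_def by (rule someI_ex[where P="\<lambda>B. \<forall>m. \<bar>hd j (X m)\<bar> \<le> B", THEN spec])
  qed
  define f where "f y = (\<Sum>i. (1/4)^i * G i y)" for y
  have f_bl: "bounded_linear f" unfolding f_def by (rule series_bl[OF Gb])
  have big: "real j < f (X (n j))" for j
  proof -
    let ?x = "X (n j)"
    have sm: "summable (\<lambda>i. (1/4)^i * G i ?x)" using series_bound(1)[OF Gb(2), where k=0 and y="?x"] by simp
    have "f ?x = (\<Sum>i. (1/4)^(i + Suc j) * G (i + Suc j) ?x) + (\<Sum>i<Suc j. (1/4)^i * G i ?x)"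
      unfolding f_def by (rule suminf_split_initial_segment[OF sm])
    also have "(\<Sum>i<Suc j. (1/4)^i * G i ?x) = hd j ?x + (1/4)^j * G j ?x"
      by (simp add: hd_eq)
    finally have fx: "f ?x = (\<Sum>i. (1/4)^(i + Suc j) * G (i + Suc j) ?x) + hd j ?x + (1/4)^j * G j ?x" by simp
    have t: "\<bar>\<Sum>i. (1/4)^(i + Suc j) * G (i + Suc j) ?x\<bar> \<le> (1/4)^(Suc j) * (4/3) * norm ?x"
      by (rule series_bound(2)[OF Gb(2)])
    have "norm ?x \<le> 2 * G j ?x" unfolding G_def n_def by (rule gsel(3))
    hence g: "(1/4)^j * norm ?x / 2 \<le> (1/4)^j * G j ?x" by (simp add: mult_left_mono)
    have h: "- bnd (hd j) \<le> hd j ?x" using bnd[of j "n j"] by simp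
    have "(1/4)^j * norm ?x / 6 - bnd (hd j) \<le> f ?x"
    proof -
      have "(1/4::real)^(Suc j) * (4/3) * norm ?x = (1/4)^j * norm ?x / 3" by simp
      hence t': "\<bar>\<Sum>i. (1/4)^(i + Suc j) * G (i + Suc j) ?x\<bar> \<le> (1/4)^j * norm ?x / 3" using t by linarith
      show ?thesis using fx t' g h by linarith
    qed
    moreover have "6 * 4^j * (bnd (hd j) + real j) < norm ?x" unfolding n_def by (rule nsel)
    hence "bnd (hd j) + real j < (1/4)^j * norm ?x / 6"
      by (simp add: field_simps power_divide)
    ultimately show ?thesis by linarith
  qed
  have "Bseq (\<lambda>m. f (X m))" by (rule convergent_imp_Bseq[OF conv[OF f_bl]])
  then obtain K where K: "\<forall>m. norm (f (X m)) \<le> K" unfolding Bseq_def by blast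
  obtain j :: nat where "K < real j" using reals_Archimedean2 by blast
  thus False using big[of j] K[rule_format, of "n j"] by simp
qed

lemma head_norm: "norm (Rj {..<m} x) \<le> (\<Sum>k<m. \<bar>Rep_jam x k\<bar>)"
proof -
  have "norm (Rj {..<m} x) \<le> (\<Sum>k<m. \<bar>Rep_jam (Rj {..<m} x) k\<bar>)"
    by (rule finite_support_norm) (simp_all add: Rep_Rj cvx_lessThan R_def)
  also have "\<dots> = (\<Sum>k<m. \<bar>Rep_jam x k\<bar>)" by (simp add: Rep_Rj cvx_lessThan R_def)
  finally show ?thesis .
qed

lemma split3:
  assumes "a \<le> b"
  shows "x - Rj {a..<b} x = Rj {..<a} x + Rj {b..} x"
  by (rule jam_eqI) (use assms in \<open>simp add: Rep_Rj cvx_lessThan cvx_atLeast cvx_atLeastLessThan R_def\<close>)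

lemma extract_blocks:
  fixes Y :: "nat \<Rightarrow> jam" and \<eta> :: "nat \<Rightarrow> real" and Q :: "nat \<Rightarrow> nat \<Rightarrow> bool"
  assumes coord: "\<And>k. (\<lambda>n. Rep_jam (Y n) k) \<longlonglongrightarrow> 0"
    and eta: "\<And>j. 0 < \<eta> j"
    and Q: "\<And>j. eventually (Q j) sequentially"
  shows "\<exists>n p. strict_mono n \<and> strict_mono p \<and> p 0 = p0 \<and>
           (\<forall>j. Q j (n j) \<and> norm (Y (n j) - Rj (blk p j) (Y (n j))) \<le> \<eta> j)"
proof -
  have ev: "\<exists>n\<ge>lb. Q j n \<and> (\<Sum>k<m. \<bar>Rep_jam (Y n) k\<bar>) \<le> \<eta> j / 2" for j lb m
  proof -
    have "(\<lambda>n. \<Sum>k<m. \<bar>Rep_jam (Y n) k\<bar>) \<longlonglongrightarrow> (\<Sum>k<m. \<bar>0::real\<bar>)"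
      by (intro tendsto_sum tendsto_rabs coord)
    hence "\<forall>\<^sub>F n in sequentially. (\<Sum>k<m. \<bar>Rep_jam (Y n) k\<bar>) < \<eta> j / 2"
      using eta[of j] by (intro order_tendstoD) auto
    hence "\<forall>\<^sub>F n in sequentially. Q j n \<and> (\<Sum>k<m. \<bar>Rep_jam (Y n) k\<bar>) \<le> \<eta> j / 2 \<and> lb \<le> n"
      using Q[of j] eventually_ge_at_top[of lb] by eventually_elim auto
    then obtain N where "\<forall>n\<ge>N. Q j n \<and> (\<Sum>k<m. \<bar>Rep_jam (Y n) k\<bar>) \<le> \<eta> j / 2 \<and> lb \<le> n"
      unfolding eventually_sequentially by blast
    thus ?thesis by blast
  qed
  define nsel where "nsel j st = (SOME n. n \<ge> fst st \<and> Q j n \<and> (\<Sum>k<snd st. \<bar>Rep_jam (Y n) k\<bar>) \<le> \<eta> j / 2)"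
    for j and st :: "nat \<times> nat"
  have nsel: "nsel j st \<ge> fst st" "Q j (nsel j st)" "(\<Sum>k<snd st. \<bar>Rep_jam (Y (nsel j st)) k\<bar>) \<le> \<eta> j / 2" for j st
    using someI_ex[OF ev[of "fst st" j "snd st"]] unfolding nsel_def by blast+
  have evp: "\<exists>q. q > snd st \<and> norm (Rj {q..} (Y (nsel j st))) \<le> \<eta> j / 2" for j st
  proof -
    obtain q where "\<forall>q'\<ge>q. norm (Rj {q'..} (Y (nsel j st))) \<le> \<eta> j / 2"
      using tail_small_jam[of "\<eta> j / 2"] eta[of j] by auto
    thus ?thesis by (intro exI[of _ "max q (Suc (snd st))"]) auto
  qed
  define psel where "psel j st = (SOME q. q > snd st \<and> norm (Rj {q..} (Y (nsel j st))) \<le> \<eta> j / 2)"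
    for j and st :: "nat \<times> nat"
  have psel: "psel j st > snd st" "norm (Rj {psel j st..} (Y (nsel j st))) \<le> \<eta> j / 2" for j st
    using someI_ex[OF evp[of st j]] unfolding psel_def by blast+
  define pr where "pr = rec_nat (0, p0) (\<lambda>j st. (Suc (nsel j st), psel j st))"
  have pr0: "pr 0 = (0, p0)" unfolding pr_def by simp
  have prS: "pr (Suc j) = (Suc (nsel j (pr j)), psel j (pr j))" for j unfolding pr_def by simp
  define n where "n j = nsel j (pr j)" for j
  define p where "p j = snd (pr j)" for j
  have pS: "p (Suc j) = psel j (pr j)" for j unfolding p_def prS by simp
  have smp: "strict_mono p"
    unfolding strict_mono_Suc_iff using psel(1) pS p_def by simp
  have smn: "strict_mono n"
  proof (unfold strict_mono_Suc_iff, rule allI)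
    fix j
    have "n (Suc j) \<ge> fst (pr (Suc j))" unfolding n_def by (rule nsel(1))
    thus "n j < n (Suc j)" unfolding prS n_def by simp
  qed
  have main: "Q j (n j) \<and> norm (Y (n j) - Rj (blk p j) (Y (n j))) \<le> \<eta> j" for j
  proof
    show "Q j (n j)" unfolding n_def by (rule nsel(2))
    have le: "p j \<le> p (Suc j)" using smp by (simp add: strict_mono_less_eq)
    have "Y (n j) - Rj (blk p j) (Y (n j)) = Rj {..<p j} (Y (n j)) + Rj {p (Suc j)..} (Y (n j))"
      unfolding blk_def by (rule split3[OF le])
    hence "norm (Y (n j) - Rj (blk p j) (Y (n j))) \<le> norm (Rj {..<p j} (Y (n j))) + norm (Rj {p (Suc j)..} (Y (n j)))"
      by (simp add: norm_triangle_ineq)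
    also have "norm (Rj {..<p j} (Y (n j))) \<le> \<eta> j / 2"
      using head_norm[of "p j" "Y (n j)"] nsel(3)[of j "pr j"] unfolding n_def p_def by linarith
    also have "norm (Rj {p (Suc j)..} (Y (n j))) \<le> \<eta> j / 2"
      using psel(2)[of j "pr j"] unfolding pS n_def by simp
    finally show "norm (Y (n j) - Rj (blk p j) (Y (n j))) \<le> \<eta> j" by simp
  qed
  have "p 0 = p0" unfolding p_def pr0 by simp
  thus ?thesis using smn smp main by blast
qed

lemma geo_half: "(\<Sum>j<N. (1/2::real)^(Suc j)) = 1 - (1/2)^N"
  by (induction N) (simp_all add: field_simps)

lemma geo_half_le: "(\<Sum>j<N. (1/2::real)^(Suc j)) \<le> 1"
  using geo_half[of N] by simp

definition trj :: "nat \<Rightarrow> (nat \<Rightarrow> real) \<Rightarrow> jam" where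
  "trj N a = Abs_jam (tr N a)"

lemma Rep_trj: "Rep_jam (trj N a) = tr N a"
  unfolding trj_def by (simp add: Abs_jam_inverse tr_James)

lemma norm_trj: "norm (trj N a) = jnorm (tr N a)"
  by (simp add: norm_Rep Rep_trj)

lemma trj_sum: "trj N a = (\<Sum>j<N. a j *\<^sub>R E j)"
  by (rule jam_eqI) (simp add: Rep_trj Rep_E tr_def unitvec_def if_distrib cong: if_cong)

lemma tr_coord_le: "j < N \<Longrightarrow> \<bar>a j\<bar> \<le> jnorm (tr N a)"
  using coord_le_jnorm[OF tr_James, of N a j] by (simp add: tr_def)

lemma tr_sum_le: "\<bar>\<Sum>j<N. a j\<bar> \<le> jnorm (tr N a)"
proof (cases N)
  case 0 thus ?thesis using jnorm_nonneg by simp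
next
  case (Suc M)
  have "(\<Sum>j<N. a j) = isum (tr N a) {0..M}"
    unfolding isum_def tr_def Suc by (simp add: lessThan_Suc_atMost atLeast0AtMost)
  thus ?thesis using isum_le_jnorm[OF tr_James, of 0 M N a] by simp
qed

lemma tr_sq_le: "(\<Sum>j<N. (a j)^2) \<le> (jnorm (tr N a))^2"
proof -
  let ?F = "(\<lambda>j. {j..j}) ` {..<N}"
  have adm: "adm_intervals ?F"
    unfolding adm_intervals_def
  proof (intro conjI)
    show "finite ?F" by simp
    show "\<forall>I\<in>?F. \<exists>a b. a \<le> b \<and> I = {a..b}" by blast
    show "pairwise disjnt ?F" unfolding pairwise_def disjnt_def by auto
  qed
  have "fval (tr N a) ?F = (\<Sum>j<N. (isum (tr N a) {j..j})^2)"
    unfolding fval_def by (rule sum.reindex[unfolded comp_def]) (auto simp: inj_on_def)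
  also have "\<dots> = (\<Sum>j<N. (a j)^2)" by (simp add: isum_def tr_def)
  finally show ?thesis using fval_le[OF tr_James[of N a] adm] by simp
qed

lemma tr_l1: "jnorm (tr N (\<lambda>j. a j * b j)) \<le> jnorm (tr N a) * (\<Sum>j<N. \<bar>b j\<bar>)"
proof -
  have "jnorm (tr N (\<lambda>j. a j * b j)) = norm (trj N (\<lambda>j. a j * b j))" by (simp add: norm_trj)
  also have "\<dots> \<le> (\<Sum>k<N. \<bar>Rep_jam (trj N (\<lambda>j. a j * b j)) k\<bar>)"
    by (rule finite_support_norm) (simp_all add: Rep_trj tr_def)
  also have "\<dots> = (\<Sum>k<N. \<bar>a k\<bar> * \<bar>b k\<bar>)" by (simp add: Rep_trj tr_def abs_mult)
  also have "\<dots> \<le> (\<Sum>k<N. jnorm (tr N a) * \<bar>b k\<bar>)"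
    by (intro sum_mono mult_right_mono tr_coord_le) auto
  finally show ?thesis by (simp add: sum_distrib_left)
qed

lemma norm_sum_coef:
  fixes V :: "nat \<Rightarrow> jam"
  shows "norm (\<Sum>j<N. a j *\<^sub>R V j) \<le> jnorm (tr N a) * (\<Sum>j<N. norm (V j))"
proof -
  have "norm (\<Sum>j<N. a j *\<^sub>R V j) \<le> (\<Sum>j<N. \<bar>a j\<bar> * norm (V j))"
    by (rule order_trans[OF norm_sum]) simp
  also have "\<dots> \<le> (\<Sum>j<N. jnorm (tr N a) * norm (V j))"
    by (intro sum_mono mult_right_mono tr_coord_le) auto
  finally show ?thesis by (simp add: sum_distrib_left)
qed

definition bs :: "(nat \<Rightarrow> nat) \<Rightarrow> jam \<Rightarrow> jam" where
  "bs p x = Abs_jam (\<lambda>j. isum (Rep_jam x) (blk p j))"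

locale jb =
  fixes X :: "nat \<Rightarrow> jam" and C :: jam and U :: "nat \<Rightarrow> jam" and p :: "nat \<Rightarrow> nat"
    and \<delta> \<epsilon> \<kappa> K :: real
  assumes p: "strict_mono p"
    and supp: "\<And>j k. k \<notin> blk p j \<Longrightarrow> Rep_jam (U j) k = 0"
    and Xdec: "\<And>j. norm (X j - C - U j) \<le> \<epsilon> * (1/2)^(Suc j)"
    and UK: "\<And>j. norm (U j) \<le> K"
    and lam: "\<And>j. \<bar>Lf (U j) - \<delta>\<bar> \<le> 2 * \<epsilon> * (1/2)^(Suc j)"
    and Ctail: "norm (Rj {p 0..} C) \<le> \<kappa>"
    and epos: "0 \<le> \<epsilon>"
begin

lemma Rep_bs: "Rep_jam (bs p x) = (\<lambda>j. isum (Rep_jam x) (blk p j))"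
  unfolding bs_def using bsum_James(1)[OF p Rep_James] by (simp add: Abs_jam_inverse)

lemma norm_bs: "norm (bs p x) \<le> norm x"
  using bsum_James(2)[OF p Rep_James] by (simp add: norm_Rep Rep_bs)

lemma bs_add: "bs p (x + y) = bs p x + bs p y"
  by (rule jam_eqI) (simp add: Rep_bs Rep_add isum_add)
lemma bs_scaleR: "bs p (r *\<^sub>R x) = r *\<^sub>R bs p x"
  by (rule jam_eqI) (simp add: Rep_bs Rep_scaleR isum_scale)
lemma bl_bs: "bounded_linear (bs p)"
  by (rule bounded_linear_intro[where K=1]) (auto simp: bs_add bs_scaleR norm_bs)
lemma bs_sum: "bs p (\<Sum>j\<in>A. f j) = (\<Sum>j\<in>A. bs p (f j))"
  using linear_sum[OF bounded_linear.linear[OF bl_bs]] by simp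

lemma Lf_U: "Lf (U j) = isum (Rep_jam (U j)) (blk p j)"
proof -
  have "U j = Rj (blk p j) (U j)"
    by (rule jam_eqI) (simp add: Rep_Rj blk_def cvx_atLeastLessThan R_def supp[unfolded blk_def])
  hence "Lf (U j) = Lf (Rj (blk p j) (U j))" by simp
  also have "\<dots> = isum (Rep_jam (U j)) (blk p j)" by (rule Lf_blk[OF p])
  finally show ?thesis .
qed

lemma bs_U: "bs p (U i) = Lf (U i) *\<^sub>R E i"
proof (rule jam_eqI)
  fix j
  show "Rep_jam (bs p (U i)) j = Rep_jam (Lf (U i) *\<^sub>R E i) j"
  proof (cases "j = i")
    case True thus ?thesis by (simp add: Rep_bs Lf_U Rep_E unitvec_def)
  next
    case False
    have "isum (Rep_jam (U i)) (blk p j) = 0"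
      unfolding isum_def
    proof (rule sum.neutral, rule ballI)
      fix k assume "k \<in> blk p j"
      hence "k \<notin> blk p i" using blk_disj[OF p, of k j i] False by auto
      thus "Rep_jam (U i) k = 0" by (rule supp)
    qed
    thus ?thesis using False by (simp add: Rep_bs Rep_E unitvec_def)
  qed
qed

lemma bs_C: "bs p C = bs p (Rj {p 0..} C)"
proof (rule jam_eqI)
  fix j
  have "p 0 \<le> p j" using p by (simp add: strict_mono_less_eq)
  hence "blk p j \<subseteq> {p 0..}" unfolding blk_def by auto
  thus "Rep_jam (bs p C) j = Rep_jam (bs p (Rj {p 0..} C)) j"
    unfolding Rep_bs isum_def by (intro sum.cong) (auto simp: Rep_Rj cvx_atLeast R_def)
qed

lemma norm_bs_C: "norm (bs p C) \<le> \<kappa>"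
  using norm_bs[of "Rj {p 0..} C"] Ctail bs_C by simp

definition Er where "Er j = X j - C - U j"

lemma X_dec: "X j = C + U j + Er j" unfolding Er_def by simp

lemma sum_dec: "(\<Sum>j<N. a j *\<^sub>R X j) = (\<Sum>j<N. a j) *\<^sub>R C + (\<Sum>j<N. a j *\<^sub>R U j) + (\<Sum>j<N. a j *\<^sub>R Er j)"
  by (simp add: X_dec scaleR_add_right sum.distrib scaleR_sum_left)

lemma norm_Er_sum: "norm (\<Sum>j<N. a j *\<^sub>R Er j) \<le> \<epsilon> * jnorm (tr N a)"
proof -
  have "(\<Sum>j<N. norm (Er j)) \<le> (\<Sum>j<N. \<epsilon> * (1/2)^(Suc j))"
    by (intro sum_mono) (unfold Er_def, rule Xdec)
  also have "\<dots> = \<epsilon> * (\<Sum>j<N. (1/2)^(Suc j))" by (rule sum_distrib_left[symmetric])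
  also have "\<dots> \<le> \<epsilon> * 1" by (rule mult_left_mono[OF geo_half_le epos])
  finally have e: "(\<Sum>j<N. norm (Er j)) \<le> \<epsilon>" by simp
  have "norm (\<Sum>j<N. a j *\<^sub>R Er j) \<le> jnorm (tr N a) * (\<Sum>j<N. norm (Er j))" by (rule norm_sum_coef)
  also have "\<dots> \<le> jnorm (tr N a) * \<epsilon>" by (rule mult_left_mono[OF e jnorm_nonneg])
  finally show ?thesis by (simp add: mult.commute)
qed

lemma lam_l1: "(\<Sum>j<N. \<bar>Lf (U j) - \<delta>\<bar>) \<le> 2 * \<epsilon>"
proof -
  have "(\<Sum>j<N. \<bar>Lf (U j) - \<delta>\<bar>) \<le> (\<Sum>j<N. 2 * \<epsilon> * (1/2)^(Suc j))" by (intro sum_mono lam)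
  also have "\<dots> = 2 * \<epsilon> * (\<Sum>j<N. (1/2)^(Suc j))" by (rule sum_distrib_left[symmetric])
  also have "\<dots> \<le> 2 * \<epsilon> * 1" by (rule mult_left_mono[OF geo_half_le]) (use epos in simp)
  finally show ?thesis by simp
qed

lemma trlam_le: "jnorm (tr N (\<lambda>j. a j * Lf (U j))) \<le> (\<bar>\<delta>\<bar> + 2 * \<epsilon>) * jnorm (tr N a)"
proof -
  have eq: "tr N (\<lambda>j. a j * Lf (U j)) = (\<lambda>i. tr N (\<lambda>j. \<delta> * a j) i + tr N (\<lambda>j. a j * (Lf (U j) - \<delta>)) i)"
    by (auto simp: tr_def algebra_simps)
  have "tr N (\<lambda>j. \<delta> * a j) = (\<lambda>i. \<delta> * tr N a i)" by (auto simp: tr_def)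
  hence n1: "jnorm (tr N (\<lambda>j. \<delta> * a j)) = \<bar>\<delta>\<bar> * jnorm (tr N a)" using James_scale[OF tr_James] by simp
  have "jnorm (tr N (\<lambda>j. a j * (Lf (U j) - \<delta>))) \<le> jnorm (tr N a) * (\<Sum>j<N. \<bar>Lf (U j) - \<delta>\<bar>)"
    by (rule tr_l1)
  also have "\<dots> \<le> jnorm (tr N a) * (2 * \<epsilon>)" by (rule mult_left_mono[OF lam_l1 jnorm_nonneg])
  finally have n2: "jnorm (tr N (\<lambda>j. a j * (Lf (U j) - \<delta>))) \<le> jnorm (tr N a) * (2 * \<epsilon>)" .
  have "jnorm (tr N (\<lambda>j. a j * Lf (U j))) \<le> jnorm (tr N (\<lambda>j. \<delta> * a j)) + jnorm (tr N (\<lambda>j. a j * (Lf (U j) - \<delta>)))"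
    unfolding eq by (rule James_add(2)[OF tr_James tr_James])
  moreover have "(\<bar>\<delta>\<bar> + 2 * \<epsilon>) * jnorm (tr N a) = \<bar>\<delta>\<bar> * jnorm (tr N a) + jnorm (tr N a) * (2 * \<epsilon>)"
    by (simp add: algebra_simps)
  ultimately show ?thesis using n1 n2 by linarith
qed

lemma trlam_ge: "(\<bar>\<delta>\<bar> - 2 * \<epsilon>) * jnorm (tr N a) \<le> jnorm (tr N (\<lambda>j. a j * Lf (U j)))"
proof -
  have eq: "tr N (\<lambda>j. \<delta> * a j) = (\<lambda>i. tr N (\<lambda>j. a j * Lf (U j)) i + tr N (\<lambda>j. a j * (\<delta> - Lf (U j))) i)"
    by (auto simp: tr_def algebra_simps)
  have "tr N (\<lambda>j. \<delta> * a j) = (\<lambda>i. \<delta> * tr N a i)" by (auto simp: tr_def)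
  hence n1: "jnorm (tr N (\<lambda>j. \<delta> * a j)) = \<bar>\<delta>\<bar> * jnorm (tr N a)" using James_scale[OF tr_James] by simp
  have l: "(\<Sum>j<N. \<bar>\<delta> - Lf (U j)\<bar>) \<le> 2 * \<epsilon>" using lam_l1[of N] by (simp add: abs_minus_commute)
  have "jnorm (tr N (\<lambda>j. a j * (\<delta> - Lf (U j)))) \<le> jnorm (tr N a) * (\<Sum>j<N. \<bar>\<delta> - Lf (U j)\<bar>)"
    by (rule tr_l1)
  also have "\<dots> \<le> jnorm (tr N a) * (2 * \<epsilon>)" by (rule mult_left_mono[OF l jnorm_nonneg])
  finally have n2: "jnorm (tr N (\<lambda>j. a j * (\<delta> - Lf (U j)))) \<le> jnorm (tr N a) * (2 * \<epsilon>)" .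
  have "jnorm (tr N (\<lambda>j. \<delta> * a j)) \<le> jnorm (tr N (\<lambda>j. a j * Lf (U j))) + jnorm (tr N (\<lambda>j. a j * (\<delta> - Lf (U j))))"
    unfolding eq by (rule James_add(2)[OF tr_James tr_James])
  moreover have "(\<bar>\<delta>\<bar> - 2 * \<epsilon>) * jnorm (tr N a) = \<bar>\<delta>\<bar> * jnorm (tr N a) - jnorm (tr N a) * (2 * \<epsilon>)"
    by (simp add: algebra_simps)
  ultimately show ?thesis using n1 n2 by linarith
qed

lemma lower:
  "(\<bar>\<delta>\<bar> - 3 * \<epsilon> - \<kappa>) * jnorm (tr N a) \<le> norm (\<Sum>j<N. a j *\<^sub>R X j)"
proof -
  let ?A = "jnorm (tr N a)"
  let ?s = "\<Sum>j<N. a j"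
  have "bs p (\<Sum>j<N. a j *\<^sub>R X j) = ?s *\<^sub>R bs p C + (\<Sum>j<N. (a j * Lf (U j)) *\<^sub>R E j) + bs p (\<Sum>j<N. a j *\<^sub>R Er j)"
    by (simp add: sum_dec bs_add bs_scaleR bs_sum bs_U)
  hence "(\<Sum>j<N. (a j * Lf (U j)) *\<^sub>R E j) = bs p (\<Sum>j<N. a j *\<^sub>R X j) - ?s *\<^sub>R bs p C - bs p (\<Sum>j<N. a j *\<^sub>R Er j)"
    by (simp add: algebra_simps)
  hence "norm (\<Sum>j<N. (a j * Lf (U j)) *\<^sub>R E j) \<le> norm (bs p (\<Sum>j<N. a j *\<^sub>R X j)) + norm (?s *\<^sub>R bs p C) + norm (bs p (\<Sum>j<N. a j *\<^sub>R Er j))"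
    by (metis (no_types, lifting) norm_triangle_ineq4 add_right_mono order_trans)
  also have "\<dots> \<le> norm (\<Sum>j<N. a j *\<^sub>R X j) + ?A * \<kappa> + \<epsilon> * ?A"
  proof (intro add_mono)
    show "norm (bs p (\<Sum>j<N. a j *\<^sub>R X j)) \<le> norm (\<Sum>j<N. a j *\<^sub>R X j)" by (rule norm_bs)
    show "norm (?s *\<^sub>R bs p C) \<le> ?A * \<kappa>"
      using tr_sum_le[where N=N and a=a] norm_bs_C by (simp add: mult_mono)
    show "norm (bs p (\<Sum>j<N. a j *\<^sub>R Er j)) \<le> \<epsilon> * ?A"
      using norm_bs norm_Er_sum order_trans by blast
  qed
  finally have "norm (\<Sum>j<N. (a j * Lf (U j)) *\<^sub>R E j) \<le> norm (\<Sum>j<N. a j *\<^sub>R X j) + ?A * \<kappa> + \<epsilon> * ?A" .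
  moreover have "norm (\<Sum>j<N. (a j * Lf (U j)) *\<^sub>R E j) = jnorm (tr N (\<lambda>j. a j * Lf (U j)))"
    using norm_trj[of N "\<lambda>j. a j * Lf (U j)"] trj_sum[of N "\<lambda>j. a j * Lf (U j)"] by simp
  ultimately show ?thesis using trlam_ge[where N=N and a=a] by (simp add: algebra_simps)
qed

end

context jb begin

lemma K_nonneg: "0 \<le> K" using UK[of 0] norm_ge_zero[of "U 0"] by linarith

lemma upper:
  "norm (\<Sum>j<N. a j *\<^sub>R X j) \<le> (norm C + 2 * \<bar>\<delta>\<bar> + 5 * \<epsilon> + 2 * K) * jnorm (tr N a)"
proof -
  let ?A = "jnorm (tr N a)"
  let ?W = "\<Sum>j<N. a j *\<^sub>R U j"
  have A0: "0 \<le> ?A" by (rule jnorm_nonneg)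
  have RW: "Rep_jam ?W = (\<lambda>k. \<Sum>i<N. a i * Rep_jam (U i) k)" by (simp add: Rep_sum)
  have ub: "(jnorm (\<lambda>k. \<Sum>i<N. a i * Rep_jam (U i) k))^2 \<le> 2 * (jnorm (tr N (\<lambda>i. a i * isum (Rep_jam (U i)) (blk p i))))^2
      + 4 * (\<Sum>i<N. (a i)^2 * (jnorm (Rep_jam (U i)))^2)"
    by (rule upper_block(2)[OF p Rep_James supp])
  have "tr N (\<lambda>i. a i * isum (Rep_jam (U i)) (blk p i)) = tr N (\<lambda>i. a i * Lf (U i))" by (simp add: Lf_U)
  hence t1: "jnorm (tr N (\<lambda>i. a i * isum (Rep_jam (U i)) (blk p i))) \<le> (\<bar>\<delta>\<bar> + 2 * \<epsilon>) * ?A"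
    using trlam_le by simp
  have t1': "(jnorm (tr N (\<lambda>i. a i * isum (Rep_jam (U i)) (blk p i))))^2 \<le> ((\<bar>\<delta>\<bar> + 2 * \<epsilon>) * ?A)^2"
    by (rule power_mono[OF t1 jnorm_nonneg])
  have "(\<Sum>i<N. (a i)^2 * (jnorm (Rep_jam (U i)))^2) \<le> (\<Sum>i<N. (a i)^2 * K^2)"
  proof (rule sum_mono)
    fix i assume "i \<in> {..<N}"
    have "(jnorm (Rep_jam (U i)))^2 \<le> K^2" using UK[of i] by (simp add: norm_Rep power_mono jnorm_nonneg)
    thus "(a i)^2 * (jnorm (Rep_jam (U i)))^2 \<le> (a i)^2 * K^2" by (simp add: mult_left_mono)
  qed
  also have "\<dots> = K^2 * (\<Sum>i<N. (a i)^2)" by (simp add: sum_distrib_left mult.commute)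
  also have "\<dots> \<le> K^2 * ?A^2" by (rule mult_left_mono[OF tr_sq_le]) simp
  finally have t2: "(\<Sum>i<N. (a i)^2 * (jnorm (Rep_jam (U i)))^2) \<le> K^2 * ?A^2" .
  define x where "x = (\<bar>\<delta>\<bar> + 2 * \<epsilon>) * ?A"
  define y where "y = K * ?A"
  have x0: "0 \<le> x" unfolding x_def using epos A0 by simp
  have y0: "0 \<le> y" unfolding y_def using K_nonneg A0 by simp
  have "(norm ?W)^2 \<le> 2 * x^2 + 4 * y^2"
    using ub t1' t2 RW unfolding x_def y_def by (simp add: norm_Rep power_mult_distrib)
  also have "\<dots> \<le> (2 * x + 2 * y)^2"
  proof -
    have "(2 * x + 2 * y)^2 = 4 * x^2 + 8 * (x * y) + 4 * y^2" by (simp add: power2_eq_square algebra_simps)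
    moreover have "0 \<le> x * y" using x0 y0 by simp
    moreover have "0 \<le> x^2" by simp
    ultimately show ?thesis by linarith
  qed
  finally have sq: "(norm ?W)^2 \<le> (2 * x + 2 * y)^2" .
  have "norm ?W \<le> 2 * x + 2 * y" by (rule power2_le_imp_le[OF sq]) (use x0 y0 in simp)
  hence nW: "norm ?W \<le> (2 * \<bar>\<delta>\<bar> + 4 * \<epsilon> + 2 * K) * ?A" unfolding x_def y_def by (simp add: algebra_simps)
  have tri: "norm (\<Sum>j<N. a j *\<^sub>R X j) \<le> norm ((\<Sum>j<N. a j) *\<^sub>R C) + norm ?W + norm (\<Sum>j<N. a j *\<^sub>R Er j)"
    unfolding sum_dec by (rule order_trans[OF norm_triangle_ineq add_right_mono[OF norm_triangle_ineq]])
  have sC: "norm ((\<Sum>j<N. a j) *\<^sub>R C) \<le> ?A * norm C"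
    using tr_sum_le[where N=N and a=a] by (simp add: mult_right_mono)
  have "(norm C + 2 * \<bar>\<delta>\<bar> + 5 * \<epsilon> + 2 * K) * ?A = ?A * norm C + (2 * \<bar>\<delta>\<bar> + 4 * \<epsilon> + 2 * K) * ?A + \<epsilon> * ?A"
    by (simp add: algebra_simps)
  thus ?thesis using tri sC nW norm_Er_sum[where N=N and a=a] by linarith
qed

end

lemma tr_R: "tr n x = R {..<n} x"
  by (auto simp: tr_def R_def)

lemma sum_pad:
  fixes V :: "nat \<Rightarrow> jam"
  assumes "N \<le> M"
  shows "(\<Sum>j<N. a j *\<^sub>R V j) = (\<Sum>j<M. tr N a j *\<^sub>R V j)"
  using assms by (intro sum.mono_neutral_cong_left) (auto simp: tr_def)

lemma sum_seg:
  fixes V :: "nat \<Rightarrow> jam"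
  shows "(\<Sum>j\<in>{m..<n}. a j *\<^sub>R V j) = (\<Sum>j<n. R {m..} a j *\<^sub>R V j)"
proof -
  have "(\<Sum>j<n. R {m..} a j *\<^sub>R V j) = (\<Sum>j<n. if m \<le> j then a j *\<^sub>R V j else 0)"
    by (intro sum.cong) (auto simp: R_def)
  also have "\<dots> = (\<Sum>j\<in>{x\<in>{..<n}. m \<le> x}. a j *\<^sub>R V j)" by (rule sum.inter_filter[symmetric]) simp
  also have "{x\<in>{..<n}. m \<le> x} = {m..<n}" by auto
  finally show ?thesis by simp
qed

locale jb2 = jb +
  assumes dnz: "\<delta> \<noteq> 0"
    and half: "3 * \<epsilon> + \<kappa> \<le> \<bar>\<delta>\<bar> / 2"
    and small: "4 * (norm C + 2 * \<bar>\<delta>\<bar> + 5 * \<epsilon> + 2 * K) * (\<kappa> + 3 * \<epsilon>) \<le> \<delta>^2"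
begin

definition "Cu = norm C + 2 * \<bar>\<delta>\<bar> + 5 * \<epsilon> + 2 * K"

lemma Cu_nonneg: "0 \<le> Cu" unfolding Cu_def using epos K_nonneg by simp

lemma upper': "norm (\<Sum>j<N. a j *\<^sub>R X j) \<le> Cu * jnorm (tr N a)"
  unfolding Cu_def by (rule upper)

lemma lower': "jnorm (tr N a) \<le> (2 / \<bar>\<delta>\<bar>) * norm (\<Sum>j<N. a j *\<^sub>R X j)"
proof -
  have "(\<bar>\<delta>\<bar> / 2) * jnorm (tr N a) \<le> (\<bar>\<delta>\<bar> - 3 * \<epsilon> - \<kappa>) * jnorm (tr N a)"
    using half jnorm_nonneg[of "tr N a"] by (intro mult_right_mono) simp_all
  also have "\<dots> \<le> norm (\<Sum>j<N. a j *\<^sub>R X j)" by (rule lower)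
  finally show ?thesis using dnz by (simp add: field_simps)
qed

definition S :: "jam \<Rightarrow> jam" where "S a = (\<Sum>j. Rep_jam a j *\<^sub>R X j)"

lemma summable_S: "summable (\<lambda>j. Rep_jam a j *\<^sub>R X j)"
proof (rule iffD2[OF summable_Cauchy], intro allI impI)
  fix e :: real assume "0 < e"
  obtain M where M: "\<forall>q\<ge>M. jnorm (R {q..} (Rep_jam a)) \<le> e / (2 * (Cu + 1))"
    using tail_small[OF Rep_James, of "e / (2 * (Cu + 1))" a] \<open>0 < e\<close> Cu_nonneg by auto
  show "\<exists>N. \<forall>m\<ge>N. \<forall>n. norm (\<Sum>j\<in>{m..<n}. Rep_jam a j *\<^sub>R X j) < e"
  proof (intro exI allI impI)
    fix m n assume "M \<le> m"
    have "norm (\<Sum>j\<in>{m..<n}. Rep_jam a j *\<^sub>R X j) = norm (\<Sum>j<n. R {m..} (Rep_jam a) j *\<^sub>R X j)"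
      by (simp add: sum_seg)
    also have "\<dots> \<le> Cu * jnorm (tr n (R {m..} (Rep_jam a)))" by (rule upper')
    also have "jnorm (tr n (R {m..} (Rep_jam a))) \<le> jnorm (R {m..} (Rep_jam a))"
      unfolding tr_R by (rule R_James(2)[OF R_James'[OF cvx_atLeast] cvx_lessThan])
    hence "Cu * jnorm (tr n (R {m..} (Rep_jam a))) \<le> Cu * (e / (2 * (Cu + 1)))"
      using M \<open>M \<le> m\<close> Cu_nonneg by (meson mult_left_mono order_trans)
    also have "\<dots> < e"
    proof -
      have "0 < 2 * (Cu + 1)" using Cu_nonneg by simp
      moreover have "Cu * e < e * (2 * (Cu + 1))" using \<open>0 < e\<close> Cu_nonneg
        by (simp add: algebra_simps) (simp add: add_pos_nonneg)
      ultimately show ?thesis by (simp add: field_simps)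
    qed
    finally show "norm (\<Sum>j\<in>{m..<n}. Rep_jam a j *\<^sub>R X j) < e" .
  qed
qed

lemma S_tendsto: "(\<lambda>n. \<Sum>j<n. Rep_jam a j *\<^sub>R X j) \<longlonglongrightarrow> S a"
  unfolding S_def using summable_LIMSEQ[OF summable_S] .

lemma partial_bound: "norm (\<Sum>j<n. Rep_jam a j *\<^sub>R X j) \<le> Cu * norm a"
proof -
  have "norm (\<Sum>j<n. Rep_jam a j *\<^sub>R X j) \<le> Cu * jnorm (tr n (Rep_jam a))" by (rule upper')
  also have "jnorm (tr n (Rep_jam a)) \<le> norm a"
    unfolding tr_R norm_Rep by (rule R_James(2)[OF Rep_James cvx_lessThan])
  hence "Cu * jnorm (tr n (Rep_jam a)) \<le> Cu * norm a" by (rule mult_left_mono[OF _ Cu_nonneg])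
  finally show ?thesis .
qed

lemma norm_S: "norm (S a) \<le> Cu * norm a"
proof -
  have "(\<lambda>n. norm (\<Sum>j<n. Rep_jam a j *\<^sub>R X j)) \<longlonglongrightarrow> norm (S a)" by (intro tendsto_norm S_tendsto)
  thus ?thesis by (rule tendsto_upperbound) (auto simp: partial_bound)
qed

lemma bl_S: "bounded_linear S"
proof (rule bounded_linear_intro[where K=Cu])
  fix x y :: jam and r :: real
  show "S (x + y) = S x + S y"
    unfolding S_def by (simp add: Rep_add scaleR_add_left suminf_add[OF summable_S summable_S])
  show "S (r *\<^sub>R x) = r *\<^sub>R S x"
    unfolding S_def by (simp add: Rep_scaleR suminf_scaleR_right[OF summable_S])
  show "norm (S x) \<le> norm x * Cu" using norm_S by (simp add: mult.commute)
qed

lemma S_trj: "S (trj N a) = (\<Sum>j<N. a j *\<^sub>R X j)"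
proof -
  have "S (trj N a) = (\<Sum>j<N. Rep_jam (trj N a) j *\<^sub>R X j)"
    unfolding S_def by (rule suminf_finite) (auto simp: Rep_trj tr_def)
  thus ?thesis by (simp add: Rep_trj tr_def)
qed

definition T :: "jam \<Rightarrow> jam" where "T x = S ((1 / \<delta>) *\<^sub>R bs p x)"

lemma bl_T: "bounded_linear T"
  unfolding T_def
  by (intro bounded_linear_compose[OF bl_S] bounded_linear_compose[OF bounded_linear_scaleR_right bl_bs])

definition Yc :: "jam set" where
  "Yc = {y. \<forall>e>0. \<exists>a N. norm (y - (\<Sum>j<N. a j *\<^sub>R X j)) < e}"

lemma Sp_Yc: "(\<Sum>j<N. a j *\<^sub>R X j) \<in> Yc"
  unfolding Yc_def by (auto intro!: exI[of _ a] exI[of _ N])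

lemma Yc_approx: "y \<in> Yc \<Longrightarrow> 0 < e \<Longrightarrow> \<exists>a N. norm (y - (\<Sum>j<N. a j *\<^sub>R X j)) < e"
  unfolding Yc_def by blast

lemma Yc_add: assumes "y \<in> Yc" "z \<in> Yc" shows "y + z \<in> Yc"
  unfolding Yc_def
proof (intro CollectI allI impI)
  fix e :: real assume "0 < e"
  obtain a N where a: "norm (y - (\<Sum>j<N. a j *\<^sub>R X j)) < e/2" using Yc_approx[OF assms(1), of "e/2"] \<open>0 < e\<close> by auto
  obtain b M where b: "norm (z - (\<Sum>j<M. b j *\<^sub>R X j)) < e/2" using Yc_approx[OF assms(2), of "e/2"] \<open>0 < e\<close> by auto
  let ?L = "max N M"
  have "(\<Sum>j<N. a j *\<^sub>R X j) + (\<Sum>j<M. b j *\<^sub>R X j) = (\<Sum>j<?L. (tr N a j + tr M b j) *\<^sub>R X j)"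
    using sum_pad[of N ?L a X] sum_pad[of M ?L b X] by (simp add: scaleR_add_left sum.distrib)
  moreover have "norm (y + z - ((\<Sum>j<N. a j *\<^sub>R X j) + (\<Sum>j<M. b j *\<^sub>R X j))) < e"
    using a b norm_triangle_lt[of "y - (\<Sum>j<N. a j *\<^sub>R X j)" "z - (\<Sum>j<M. b j *\<^sub>R X j)" e]
    by (simp add: algebra_simps)
  ultimately show "\<exists>a N. norm (y + z - (\<Sum>j<N. a j *\<^sub>R X j)) < e"
    by (intro exI[of _ "\<lambda>j. tr N a j + tr M b j"] exI[of _ ?L]) simp
qed

lemma Yc_scaleR: assumes "y \<in> Yc" shows "r *\<^sub>R y \<in> Yc"
  unfolding Yc_def
proof (intro CollectI allI impI)
  fix e :: real assume "0 < e"
  have pos: "0 < e / (\<bar>r\<bar> + 1)" using \<open>0 < e\<close> by (simp add: add_nonneg_pos)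
  have "\<forall>e>0. \<exists>a N. norm (y - (\<Sum>j<N. a j *\<^sub>R X j)) < e" using assms unfolding Yc_def by simp
  then obtain a N where a: "norm (y - (\<Sum>j<N. a j *\<^sub>R X j)) < e / (\<bar>r\<bar> + 1)"
    using pos by blast
  have "norm (r *\<^sub>R y - (\<Sum>j<N. (r * a j) *\<^sub>R X j)) = \<bar>r\<bar> * norm (y - (\<Sum>j<N. a j *\<^sub>R X j))"
  proof -
    have "r *\<^sub>R y - (\<Sum>j<N. (r * a j) *\<^sub>R X j) = r *\<^sub>R (y - (\<Sum>j<N. a j *\<^sub>R X j))"
      by (simp add: scaleR_diff_right scaleR_sum_right)
    thus ?thesis by simp
  qed
  also have "\<dots> \<le> \<bar>r\<bar> * (e / (\<bar>r\<bar> + 1))" using a by (intro mult_left_mono) simp_all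
  also have "\<dots> < e" using \<open>0 < e\<close> by (simp add: field_simps)
  finally show "\<exists>a N. norm (r *\<^sub>R y - (\<Sum>j<N. a j *\<^sub>R X j)) < e"
    by (intro exI[of _ "\<lambda>j. r * a j"] exI[of _ N])
qed

lemma Yc_lim: assumes "\<And>n. Z n \<in> Yc" "Z \<longlonglongrightarrow> y" shows "y \<in> Yc"
  unfolding Yc_def
proof (intro CollectI allI impI)
  fix e :: real assume "0 < e"
  obtain n where n: "norm (Z n - y) < e/2"
    using LIMSEQ_D[OF assms(2), of "e/2"] \<open>0 < e\<close> by auto
  obtain a N where a: "norm (Z n - (\<Sum>j<N. a j *\<^sub>R X j)) < e/2"
    using Yc_approx[OF assms(1)[of n], of "e/2"] \<open>0 < e\<close> by auto
  have "norm (y - (\<Sum>j<N. a j *\<^sub>R X j)) \<le> norm (Z n - y) + norm (Z n - (\<Sum>j<N. a j *\<^sub>R X j))"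
  proof -
    have "y - (\<Sum>j<N. a j *\<^sub>R X j) = (y - Z n) + (Z n - (\<Sum>j<N. a j *\<^sub>R X j))" by simp
    hence "norm (y - (\<Sum>j<N. a j *\<^sub>R X j)) \<le> norm (y - Z n) + norm (Z n - (\<Sum>j<N. a j *\<^sub>R X j))"
      by (metis norm_triangle_ineq)
    thus ?thesis by (simp add: norm_minus_commute)
  qed
  thus "\<exists>a N. norm (y - (\<Sum>j<N. a j *\<^sub>R X j)) < e" using n a by (intro exI[of _ a] exI[of _ N]) linarith
qed

lemma S_Yc: "S a \<in> Yc"
  by (rule Yc_lim[OF _ S_tendsto]) (rule Sp_Yc)

lemma T_Yc: "T x \<in> Yc" unfolding T_def by (rule S_Yc)

end

context jb2 begin

lemma bs_sum_X: "bs p (\<Sum>j<N. a j *\<^sub>R X j) = (\<Sum>j<N. a j) *\<^sub>R bs p C + (\<Sum>j<N. (a j * Lf (U j)) *\<^sub>R E j) + bs p (\<Sum>j<N. a j *\<^sub>R Er j)"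
  by (simp add: sum_dec bs_add bs_scaleR bs_sum bs_U)

lemma kappa_nonneg: "0 \<le> \<kappa>" using Ctail norm_ge_zero[of "Rj {p 0..} C"] by linarith

lemma T_close_Sp: "norm (T y - y) \<le> (1/2) * norm y" if y: "y = (\<Sum>j<N. a j *\<^sub>R X j)" for y N a
proof -
  let ?A = "jnorm (tr N a)"
  let ?s = "\<Sum>j<N. a j"
  define v where "v = (1 / \<delta>) *\<^sub>R bs p y - trj N a"
  have v_eq: "v = (?s / \<delta>) *\<^sub>R bs p C + (1 / \<delta>) *\<^sub>R (\<Sum>j<N. (a j * (Lf (U j) - \<delta>)) *\<^sub>R E j) + (1 / \<delta>) *\<^sub>R bs p (\<Sum>j<N. a j *\<^sub>R Er j)"
  proof -
    have "(1 / \<delta>) *\<^sub>R (\<Sum>j<N. (a j * (Lf (U j) - \<delta>)) *\<^sub>R E j) = (1 / \<delta>) *\<^sub>R (\<Sum>j<N. (a j * Lf (U j)) *\<^sub>R E j) - trj N a"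
      using dnz by (simp add: trj_sum algebra_simps scaleR_sum_right sum_subtractf[symmetric])
    thus ?thesis unfolding v_def y bs_sum_X by (simp add: algebra_simps)
  qed
  have n1: "norm ((?s / \<delta>) *\<^sub>R bs p C) \<le> ?A * \<kappa> / \<bar>\<delta>\<bar>"
  proof -
    have "norm ((?s / \<delta>) *\<^sub>R bs p C) = \<bar>?s\<bar> * norm (bs p C) / \<bar>\<delta>\<bar>" by simp
    also have "\<dots> \<le> ?A * \<kappa> / \<bar>\<delta>\<bar>"
      using tr_sum_le[where N=N and a=a] norm_bs_C by (intro divide_right_mono mult_mono) simp_all
    finally show ?thesis .
  qed
  have n2: "norm ((1 / \<delta>) *\<^sub>R (\<Sum>j<N. (a j * (Lf (U j) - \<delta>)) *\<^sub>R E j)) \<le> ?A * (2 * \<epsilon>) / \<bar>\<delta>\<bar>"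
  proof -
    have "norm (\<Sum>j<N. (a j * (Lf (U j) - \<delta>)) *\<^sub>R E j) = jnorm (tr N (\<lambda>j. a j * (Lf (U j) - \<delta>)))"
      using norm_trj[of N "\<lambda>j. a j * (Lf (U j) - \<delta>)"] trj_sum[of N "\<lambda>j. a j * (Lf (U j) - \<delta>)"] by simp
    also have "\<dots> \<le> ?A * (\<Sum>j<N. \<bar>Lf (U j) - \<delta>\<bar>)" by (rule tr_l1)
    also have "\<dots> \<le> ?A * (2 * \<epsilon>)" by (rule mult_left_mono[OF lam_l1 jnorm_nonneg])
    finally show ?thesis by (simp add: divide_right_mono)
  qed
  have n3: "norm ((1 / \<delta>) *\<^sub>R bs p (\<Sum>j<N. a j *\<^sub>R Er j)) \<le> ?A * \<epsilon> / \<bar>\<delta>\<bar>"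
  proof -
    have "norm (bs p (\<Sum>j<N. a j *\<^sub>R Er j)) \<le> \<epsilon> * ?A" using norm_bs norm_Er_sum order_trans by blast
    thus ?thesis by (simp add: divide_right_mono mult.commute)
  qed
  have nv: "norm v \<le> ?A * (\<kappa> + 3 * \<epsilon>) / \<bar>\<delta>\<bar>"
  proof -
    have "norm v \<le> norm ((?s / \<delta>) *\<^sub>R bs p C) + norm ((1 / \<delta>) *\<^sub>R (\<Sum>j<N. (a j * (Lf (U j) - \<delta>)) *\<^sub>R E j)) + norm ((1 / \<delta>) *\<^sub>R bs p (\<Sum>j<N. a j *\<^sub>R Er j))"
      unfolding v_eq by (rule order_trans[OF norm_triangle_ineq add_right_mono[OF norm_triangle_ineq]])
    also have "\<dots> \<le> ?A * \<kappa> / \<bar>\<delta>\<bar> + ?A * (2 * \<epsilon>) / \<bar>\<delta>\<bar> + ?A * \<epsilon> / \<bar>\<delta>\<bar>"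
      using n1 n2 n3 by linarith
    also have "\<dots> = ?A * (\<kappa> + 3 * \<epsilon>) / \<bar>\<delta>\<bar>" by (simp only: add_divide_distrib[symmetric]) (simp add: algebra_simps)
    finally show ?thesis .
  qed
  have Ty: "T y - y = S v"
  proof -
    have "y = S (trj N a)" using S_trj y by simp
    hence "T y - y = S ((1 / \<delta>) *\<^sub>R bs p y) - S (trj N a)" unfolding T_def by simp
    also have "\<dots> = S v" unfolding v_def by (simp add: linear_diff[OF bounded_linear.linear[OF bl_S]])
    finally show ?thesis .
  qed
  have "norm (T y - y) \<le> Cu * norm v" unfolding Ty by (rule norm_S)
  also have "\<dots> \<le> Cu * (?A * (\<kappa> + 3 * \<epsilon>) / \<bar>\<delta>\<bar>)" by (rule mult_left_mono[OF nv Cu_nonneg])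
  also have "?A \<le> (2 / \<bar>\<delta>\<bar>) * norm y" unfolding y by (rule lower')
  hence "?A * (\<kappa> + 3 * \<epsilon>) \<le> (2 / \<bar>\<delta>\<bar>) * norm y * (\<kappa> + 3 * \<epsilon>)"
    using kappa_nonneg epos by (intro mult_right_mono) simp_all
  hence "?A * (\<kappa> + 3 * \<epsilon>) / \<bar>\<delta>\<bar> \<le> (2 / \<bar>\<delta>\<bar>) * norm y * (\<kappa> + 3 * \<epsilon>) / \<bar>\<delta>\<bar>"
    by (rule divide_right_mono) simp
  hence "Cu * (?A * (\<kappa> + 3 * \<epsilon>) / \<bar>\<delta>\<bar>) \<le> Cu * ((2 / \<bar>\<delta>\<bar>) * norm y * (\<kappa> + 3 * \<epsilon>) / \<bar>\<delta>\<bar>)"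
    by (rule mult_left_mono[OF _ Cu_nonneg])
  also have "\<dots> = (2 * Cu * (\<kappa> + 3 * \<epsilon>) / \<delta>^2) * norm y"
    by (simp add: field_simps power2_eq_square)
  also have "\<dots> \<le> (1/2) * norm y"
  proof (rule mult_right_mono)
    have "0 < \<delta>^2" using dnz by simp
    thus "2 * Cu * (\<kappa> + 3 * \<epsilon>) / \<delta>^2 \<le> 1/2" using small unfolding Cu_def by (simp add: field_simps)
  qed simp
  finally show ?thesis .
qed

lemma T_close: assumes "y \<in> Yc" shows "norm (T y - y) \<le> (1/2) * norm y"
proof -
  obtain B where B: "B > 0" "\<And>x. norm (T x) \<le> norm x * B" using bounded_linear.pos_bounded[OF bl_T] by blast
  show ?thesis
  proof (rule field_le_epsilon)
    fix e :: real assume "0 < e"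
    have "0 < e / (B + 2)" using \<open>0 < e\<close> B(1) by simp
    then obtain a N where a: "norm (y - (\<Sum>j<N. a j *\<^sub>R X j)) < e / (B + 2)" using Yc_approx[OF assms] by blast
    define z where "z = (\<Sum>j<N. a j *\<^sub>R X j)"
    have nz: "norm (y - z) < e / (B + 2)" using a z_def by simp
    have "T y - y = (T z - z) + (T (y - z) - (y - z))"
      by (simp add: linear_diff[OF bounded_linear.linear[OF bl_T]])
    hence "norm (T y - y) \<le> norm (T z - z) + norm (T (y - z) - (y - z))" by (metis norm_triangle_ineq)
    also have "norm (T z - z) \<le> (1/2) * norm z" by (rule T_close_Sp[OF z_def])
    also have "norm (T (y - z) - (y - z)) \<le> norm (y - z) * B + norm (y - z)"
      using B(2)[of "y - z"] norm_triangle_ineq4[of "T (y - z)" "y - z"] by linarith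
    finally have 1: "norm (T y - y) \<le> (1/2) * norm z + (norm (y - z) * B + norm (y - z))" by simp
    have "norm z \<le> norm y + norm (y - z)" by (metis norm_triangle_sub norm_minus_commute add.commute)
    moreover have "norm (y - z) * (B + 2) = norm (y - z) * B + 2 * norm (y - z)" by (simp add: algebra_simps)
    ultimately have 2: "norm (T y - y) \<le> (1/2) * norm y + norm (y - z) * (B + 2)" using 1 norm_ge_zero[of "y - z"] by linarith
    have "norm (y - z) * (B + 2) \<le> e" using nz B(1) by (simp add: field_simps)
    thus "norm (T y - y) \<le> (1/2) * norm y + e" using 2 by linarith
  qed
qed

definition D :: "jam \<Rightarrow> jam" where "D y = y - T y"

lemma bl_D: "bounded_linear D"
  unfolding D_def by (intro bounded_linear_sub bounded_linear_ident bl_T)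

lemma bl_Dpow: "bounded_linear (D ^^ k)"
proof (induction k)
  case 0 thus ?case by (simp add: bounded_linear_ident id_def)
next
  case (Suc k)
  have "D ^^ Suc k = (\<lambda>x. D ((D ^^ k) x))" by (simp add: comp_def)
  thus ?case using bounded_linear_compose[OF bl_D Suc] by simp
qed

lemma Yc_zero: "0 \<in> Yc" using Sp_Yc[where N=0] by simp

lemma Yc_diff: "y \<in> Yc \<Longrightarrow> z \<in> Yc \<Longrightarrow> y - z \<in> Yc"
  using Yc_add[of y "(-1) *\<^sub>R z"] Yc_scaleR[of z "-1"] by simp

lemma D_Yc: assumes "y \<in> Yc" shows "D y \<in> Yc \<and> norm (D y) \<le> (1/2) * norm y"
proof
  show "D y \<in> Yc" unfolding D_def by (rule Yc_diff[OF assms T_Yc])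
  have "norm (D y) = norm (T y - y)" unfolding D_def by (rule norm_minus_commute)
  thus "norm (D y) \<le> (1/2) * norm y" using T_close[OF assms] by simp
qed

lemma Dpow_Yc: "y \<in> Yc \<Longrightarrow> (D ^^ k) y \<in> Yc \<and> norm ((D ^^ k) y) \<le> (1/2)^k * norm y"
proof (induction k)
  case 0 thus ?case by simp
next
  case (Suc k)
  hence IH: "(D ^^ k) y \<in> Yc" "norm ((D ^^ k) y) \<le> (1/2)^k * norm y" by auto
  have "(D ^^ Suc k) y = D ((D ^^ k) y)" by simp
  moreover have "D ((D ^^ k) y) \<in> Yc" "norm (D ((D ^^ k) y)) \<le> (1/2) * norm ((D ^^ k) y)" using D_Yc[OF IH(1)] by auto
  ultimately show ?case using IH(2) by simp
qed

definition P :: "jam \<Rightarrow> jam" where "P x = (\<Sum>k. (D ^^ k) (T x))"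

lemma Pterm_bound: "norm ((D ^^ k) (T x)) \<le> (1/2)^k * norm (T x)"
  using Dpow_Yc[OF T_Yc] by blast

lemma geo_g: "summable (\<lambda>k. (1/2::real)^k * c)"
  by (rule summable_mult2[OF summable_geometric]) simp

lemma summable_P: "summable (\<lambda>k. (D ^^ k) (T x))"
  by (rule summable_comparison_test'[OF geo_g[of "norm (T x)"]]) (rule Pterm_bound)

lemma summable_Pn: "summable (\<lambda>k. norm ((D ^^ k) (T x)))"
  by (rule summable_comparison_test'[OF geo_g[of "norm (T x)"]]) (simp add: Pterm_bound)

lemma P_Yc: "P x \<in> Yc"
proof -
  have "(\<lambda>n. \<Sum>k<n. (D ^^ k) (T x)) \<longlonglongrightarrow> P x" unfolding P_def by (rule summable_LIMSEQ[OF summable_P])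
  moreover have "(\<Sum>k<n. (D ^^ k) (T x)) \<in> Yc" for n
  proof (induction n)
    case 0 show ?case using Yc_zero by simp
  next
    case (Suc n)
    have "(D ^^ n) (T x) \<in> Yc" using Dpow_Yc[OF T_Yc] by blast
    thus ?case using Yc_add[OF Suc.IH] by simp
  qed
  ultimately show ?thesis by (rule Yc_lim[of "\<lambda>n. \<Sum>k<n. (D ^^ k) (T x)", rotated])
qed

lemma P_id: assumes "y \<in> Yc" shows "P y = y"
proof -
  have t: "(\<lambda>k. (D ^^ k) y) \<longlonglongrightarrow> 0"
  proof (rule tendsto_norm_zero_cancel, rule Lim_null_comparison)
    show "\<forall>\<^sub>F k in sequentially. norm (norm ((D ^^ k) y)) \<le> (1/2)^k * norm y"
    proof (rule always_eventually, rule allI)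
      fix k show "norm (norm ((D ^^ k) y)) \<le> (1/2)^k * norm y" using Dpow_Yc[OF assms, of k] by simp
    qed
    show "(\<lambda>k. (1/2::real)^k * norm y) \<longlonglongrightarrow> 0"
      by (intro tendsto_mult_left_zero LIMSEQ_power_zero) simp
  qed
  have "(D ^^ k) (T y) = (D ^^ k) y - (D ^^ Suc k) y" for k
  proof -
    have "T y = y - D y" unfolding D_def by simp
    hence "(D ^^ k) (T y) = (D ^^ k) y - (D ^^ k) (D y)"
      by (simp add: linear_diff[OF bounded_linear.linear[OF bl_Dpow]])
    thus ?thesis by (simp add: funpow_swap1)
  qed
  hence "(\<lambda>k. (D ^^ k) (T y)) sums ((D ^^ 0) y - 0)"
    using telescope_sums'[OF t] by simp
  hence "(\<lambda>k. (D ^^ k) (T y)) sums y" by simp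
  thus ?thesis unfolding P_def by (rule sums_unique[symmetric])
qed

lemma bl_P: "bounded_linear P"
proof -
  obtain B where B: "\<And>x. norm (T x) \<le> norm x * B" using bounded_linear.bounded[OF bl_T] by blast
  show ?thesis
  proof (rule bounded_linear_intro[where K="2 * B"])
    fix x y :: jam and r :: real
    have lin: "linear (D ^^ k)" for k by (rule bounded_linear.linear[OF bl_Dpow])
    have linT: "linear T" by (rule bounded_linear.linear[OF bl_T])
    show "P (x + y) = P x + P y"
      unfolding P_def by (simp add: linear_add[OF linT] linear_add[OF lin] suminf_add[OF summable_P summable_P])
    show "P (r *\<^sub>R x) = r *\<^sub>R P x"
      unfolding P_def by (simp add: linear_scale[OF linT] linear_scale[OF lin] suminf_scaleR_right[OF summable_P])
    have "norm (P x) \<le> (\<Sum>k. norm ((D ^^ k) (T x)))" unfolding P_def by (rule summable_norm[OF summable_Pn])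
    also have "\<dots> \<le> (\<Sum>k. (1/2)^k * norm (T x))"
      by (rule suminf_le[OF Pterm_bound summable_Pn geo_g])
    also have "\<dots> = 2 * norm (T x)"
      using suminf_mult2[OF summable_geometric[of "1/2::real"], of "norm (T x)"] suminf_geometric[of "1/2::real"] by simp
    also have "\<dots> \<le> norm x * (2 * B)" using B[of x] by simp
    finally show "norm (P x) \<le> norm x * (2 * B)" .
  qed
qed

end

lemma tr_l1': "jnorm (tr N b) \<le> (\<Sum>j<N. \<bar>b j\<bar>)"
proof -
  have "jnorm (tr N b) = norm (trj N b)" by (simp add: norm_trj)
  also have "\<dots> \<le> (\<Sum>k<N. \<bar>Rep_jam (trj N b) k\<bar>)"
    by (rule finite_support_norm) (simp_all add: Rep_trj tr_def)
  also have "\<dots> = (\<Sum>k<N. \<bar>b k\<bar>)" by (simp add: Rep_trj tr_def)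
  finally show ?thesis .
qed

lemma cvx_blk: "cvx (blk p j)" by (simp add: blk_def cvx_atLeastLessThan)

lemma weak_null:
  fixes Y :: "nat \<Rightarrow> jam" and g :: "jam \<Rightarrow> real"
  assumes coord: "\<And>k. (\<lambda>n. Rep_jam (Y n) k) \<longlonglongrightarrow> 0"
    and bnd: "\<And>n. norm (Y n) \<le> K"
    and L: "(\<lambda>n. Lf (Y n)) \<longlonglongrightarrow> 0"
    and g: "bounded_linear g"
    and gt: "(\<lambda>n. g (Y n)) \<longlonglongrightarrow> \<beta>"
  shows "\<beta> = 0"
proof (rule ccontr)
  assume b0: "\<beta> \<noteq> 0"
  define \<eta> where "\<eta> j = (1/2::real)^(Suc j)" for j
  have eta: "0 < \<eta> j" for j unfolding \<eta>_def by simp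
  define Q where "Q j n = (\<bar>Lf (Y n)\<bar> \<le> \<eta> j \<and> \<beta>^2 / 2 \<le> \<beta> * g (Y n))" for j n
  have Q: "eventually (Q j) sequentially" for j
  proof -
    have "\<forall>\<^sub>F n in sequentially. \<bar>Lf (Y n)\<bar> < \<eta> j"
    proof -
      have "(\<lambda>n. \<bar>Lf (Y n)\<bar>) \<longlonglongrightarrow> \<bar>0\<bar>" by (intro tendsto_rabs L)
      thus ?thesis using eta[of j] by (intro order_tendstoD) auto
    qed
    moreover have "\<forall>\<^sub>F n in sequentially. \<beta>^2 / 2 < \<beta> * g (Y n)"
    proof -
      have "(\<lambda>n. \<beta> * g (Y n)) \<longlonglongrightarrow> \<beta> * \<beta>" by (intro tendsto_mult_left gt)
      moreover have "\<beta>^2 / 2 < \<beta> * \<beta>"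
      proof -
        have "0 < \<beta>^2" using b0 by simp
        thus ?thesis by (simp add: power2_eq_square)
      qed
      ultimately show ?thesis by (intro order_tendstoD) auto
    qed
    ultimately show ?thesis unfolding Q_def by eventually_elim auto
  qed
  obtain n p where np: "strict_mono n" "strict_mono p"
    "\<And>j. Q j (n j)" "\<And>j. norm (Y (n j) - Rj (blk p j) (Y (n j))) \<le> \<eta> j"
  proof -
    have "\<exists>n p. strict_mono n \<and> strict_mono p \<and> p 0 = 0 \<and>
           (\<forall>j. Q j (n j) \<and> norm (Y (n j) - Rj (blk p j) (Y (n j))) \<le> \<eta> j)"
      by (rule extract_blocks) (rule coord, rule eta, rule Q)
    thus ?thesis using that by blast
  qed
  define U where "U j = Rj (blk p j) (Y (n j))" for j
  have K0: "0 \<le> K" using bnd[of 0] norm_ge_zero[of "Y 0"] by linarith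
  have supp: "Rep_jam (U j) k = 0" if "k \<notin> blk p j" for j k
    using that by (simp add: U_def Rep_Rj[OF cvx_blk] R_def)
  have UK: "norm (U j) \<le> K" for j using norm_Rj[OF cvx_blk, of p j "Y (n j)"] bnd[of "n j"] unfolding U_def by linarith
  have lamb: "\<bar>isum (Rep_jam (U j)) (blk p j)\<bar> \<le> 2 * \<eta> j" for j
  proof -
    have "isum (Rep_jam (U j)) (blk p j) = Lf (U j)"
    proof -
      have "Lf (U j) = isum (Rep_jam (Y (n j))) (blk p j)" unfolding U_def by (rule Lf_blk[OF np(2)])
      also have "\<dots> = isum (Rep_jam (U j)) (blk p j)"
        unfolding isum_def U_def by (intro sum.cong) (simp_all add: Rep_Rj[OF cvx_blk] R_def)
      finally show ?thesis by simp
    qed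
    also have "Lf (U j) = Lf (Y (n j)) - Lf (Y (n j) - U j)"
      by (simp add: linear_diff[OF bounded_linear.linear[OF bl_Lf]])
    finally have e: "isum (Rep_jam (U j)) (blk p j) = Lf (Y (n j)) - Lf (Y (n j) - U j)" .
    have "\<bar>Lf (Y (n j) - U j)\<bar> \<le> \<eta> j" using Lf_le[of "Y (n j) - U j"] np(4)[of j] unfolding U_def by linarith
    moreover have "\<bar>Lf (Y (n j))\<bar> \<le> \<eta> j" using np(3)[of j] unfolding Q_def by simp
    ultimately show ?thesis unfolding e by linarith
  qed
  obtain B where B: "B > 0" "\<And>x. norm (g x) \<le> norm x * B" using bounded_linear.pos_bounded[OF g] by blast
  define m :: nat where "m = nat \<lceil>(8 * B + 4 * B * K) / \<bar>\<beta>\<bar>\<rceil> + 1"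
  have m1: "1 \<le> m" unfolding m_def by simp
  have mb: "(8 * B + 4 * B * K) / \<bar>\<beta>\<bar> < real m" unfolding m_def by linarith
  define N where "N = m^2"
  define W where "W = (\<Sum>j<N. U j)"
  have "(jnorm (\<lambda>k. \<Sum>i<N. 1 * Rep_jam (U i) k))^2 \<le> 2 * (jnorm (tr N (\<lambda>i. 1 * isum (Rep_jam (U i)) (blk p i))))^2
      + 4 * (\<Sum>i<N. 1^2 * (jnorm (Rep_jam (U i)))^2)"
    by (rule upper_block(2)[OF np(2) Rep_James supp])
  hence W1: "(norm W)^2 \<le> 2 * (jnorm (tr N (\<lambda>i. isum (Rep_jam (U i)) (blk p i))))^2 + 4 * (\<Sum>i<N. (norm (U i))^2)"
    unfolding W_def by (simp add: norm_Rep Rep_sum)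
  have "jnorm (tr N (\<lambda>i. isum (Rep_jam (U i)) (blk p i))) \<le> (\<Sum>i<N. \<bar>isum (Rep_jam (U i)) (blk p i)\<bar>)"
    by (rule tr_l1')
  also have "\<dots> \<le> (\<Sum>i<N. 2 * \<eta> i)" by (intro sum_mono lamb)
  also have "\<dots> = 2 * (\<Sum>i<N. (1/2)^(Suc i))" unfolding \<eta>_def by (simp add: sum_distrib_left)
  also have "\<dots> \<le> 2" using geo_half_le[of N] by simp
  finally have t1: "jnorm (tr N (\<lambda>i. isum (Rep_jam (U i)) (blk p i))) \<le> 2" .
  have t1': "(jnorm (tr N (\<lambda>i. isum (Rep_jam (U i)) (blk p i))))^2 \<le> 2^2"
    by (rule power_mono[OF t1 jnorm_nonneg])
  have "(\<Sum>i<N. (norm (U i))^2) \<le> (\<Sum>i<N. K^2)" by (intro sum_mono power_mono UK) simp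
  hence t2: "(\<Sum>i<N. (norm (U i))^2) \<le> real N * K^2" by simp
  have "(norm W)^2 \<le> 8 + 4 * (real m^2 * K^2)" using W1 t1' t2 unfolding N_def by simp
  also have "\<dots> \<le> (3 + 2 * K * real m)^2"
  proof -
    have "(3 + 2 * K * real m)^2 = 9 + 12 * (K * real m) + 4 * (real m^2 * K^2)" by (simp add: power2_eq_square algebra_simps)
    moreover have "0 \<le> K * real m" using K0 by simp
    ultimately show ?thesis by linarith
  qed
  finally have sqW: "(norm W)^2 \<le> (3 + 2 * K * real m)^2" .
  have nW: "norm W \<le> 3 + 2 * K * real m" by (rule power2_le_imp_le[OF sqW]) (use K0 in simp)
  define Z where "Z = (\<Sum>j<N. Y (n j))"
  have "Z = W + (\<Sum>j<N. Y (n j) - U j)" unfolding Z_def W_def by (simp add: sum_subtractf)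
  hence "norm Z \<le> norm W + norm (\<Sum>j<N. Y (n j) - U j)" by (metis norm_triangle_ineq)
  also have "norm (\<Sum>j<N. Y (n j) - U j) \<le> (\<Sum>j<N. norm (Y (n j) - U j))" by (rule norm_sum)
  also have "\<dots> \<le> (\<Sum>j<N. \<eta> j)" by (intro sum_mono) (unfold U_def, rule np(4))
  also have "\<dots> \<le> 1" unfolding \<eta>_def by (rule geo_half_le)
  finally have nZ: "norm Z \<le> 4 + 2 * K * real m" using nW by linarith
  have "g Z = (\<Sum>j<N. g (Y (n j)))" unfolding Z_def by (rule linear_sum[OF bounded_linear.linear[OF g]])
  hence "\<beta> * g Z = (\<Sum>j<N. \<beta> * g (Y (n j)))" by (simp add: sum_distrib_left)
  also have "\<dots> \<ge> (\<Sum>j<N. \<beta>^2 / 2)" using np(3) unfolding Q_def by (intro sum_mono) auto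
  finally have lo: "real N * (\<beta>^2 / 2) \<le> \<beta> * g Z" by simp
  have "\<beta> * g Z \<le> \<bar>\<beta>\<bar> * (norm Z * B)"
    using B(2)[of Z] by (metis abs_ge_self abs_mult abs_ge_zero mult_left_mono order_trans real_norm_def)
  also have "\<dots> \<le> \<bar>\<beta>\<bar> * ((4 + 2 * K * real m) * B)"
  proof -
    have "norm Z * B \<le> (4 + 2 * K * real m) * B" using nZ B(1) by (simp add: mult_right_mono)
    thus ?thesis by (simp add: mult_left_mono)
  qed
  finally have f1: "real m^2 * (\<beta>^2 / 2) \<le> \<bar>\<beta>\<bar> * ((4 + 2 * K * real m) * B)" using lo unfolding N_def by simp
  define a where "a = \<bar>\<beta>\<bar>"
  have a0: "0 < a" unfolding a_def using b0 by simp
  have "\<beta>^2 = a * a" unfolding a_def by (simp add: power2_eq_square abs_mult_self_eq)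
  hence "a * (real m * real m * a / 2) \<le> a * ((4 + 2 * K * real m) * B)"
    using f1 unfolding a_def[symmetric] by (simp add: power2_eq_square algebra_simps)
  hence "real m * real m * a / 2 \<le> (4 + 2 * K * real m) * B" using a0 by simp
  hence c1: "real m * real m * a \<le> 8 * B + real m * (4 * B * K)" by (simp add: algebra_simps)
  have "8 * B + 4 * B * K < real m * a" using mb a0 unfolding a_def[symmetric] by (simp add: field_simps)
  hence "real m * (8 * B + 4 * B * K) < real m * (real m * a)"
    by (rule mult_strict_left_mono) (use m1 in simp)
  hence c2: "real m * (8 * B) + real m * (4 * B * K) < real m * real m * a"
    by (simp add: algebra_simps)
  have c3: "8 * B \<le> real m * (8 * B)" using m1 B(1) by simp
  show False using c1 c2 c3 by linarith
qed

lemma lincomb_unit: "lincomb a unitvec N = tr N a"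
proof
  fix i
  have "(\<Sum>k<N. a k * unitvec k i) = (\<Sum>k<N. if k = i then a k else 0)"
    by (intro sum.cong) (auto simp: unitvec_def)
  also have "\<dots> = tr N a i" by (simp add: tr_def)
  finally show "lincomb a unitvec N i = tr N a i" by (simp add: lincomb_def)
qed

theorem mainTheorem15:
  fixes xs :: "nat \<Rightarrow> nat \<Rightarrow> real"
  assumes "nontriv_weakly_cauchy xs"
  shows "\<exists>n. strict_mono n \<and> equiv_unit_basis (xs \<circ> n) \<and> complemented (closed_span (xs \<circ> n))"
proof -
  have xsJ: "\<And>n. xs n \<in> James" using assms unfolding nontriv_weakly_cauchy_def by blast
  obtain \<phi> where conv: "\<And>f. f \<in> jdual \<Longrightarrow> (\<lambda>n. f (xs n)) \<longlonglongrightarrow> \<phi> f"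
    and nt: "\<not> (\<exists>x\<in>James. \<forall>f\<in>jdual. \<phi> f = f x)"
    using assms unfolding nontriv_weakly_cauchy_def by blast
  define X where "X n = Abs_jam (xs n)" for n
  have RX: "Rep_jam (X n) = xs n" for n unfolding X_def by (simp add: Abs_jam_inverse xsJ)
  have convX: "(\<lambda>n. g (X n)) \<longlonglongrightarrow> \<phi> (\<lambda>z. g (Abs_jam z))" if "bounded_linear g" for g :: "jam \<Rightarrow> real"
    using conv[OF bl_jdual[OF that]] unfolding X_def .
  obtain M where M: "\<And>n. norm (X n) \<le> M"
  proof -
    have "\<exists>M. \<forall>n. norm (X n) \<le> M" by (rule ubp) (rule convergentI[OF convX])
    thus ?thesis using that by blast
  qed
  have M0: "0 \<le> M" using M[of 0] norm_ge_zero[of "X 0"] by linarith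
  define c where "c k = lim (\<lambda>n. xs n k)" for k
  have cl: "(\<lambda>n. xs n k) \<longlonglongrightarrow> c k" for k
  proof -
    have "(\<lambda>n. Rep_jam (X n) k) \<longlonglongrightarrow> \<phi> (\<lambda>z. Rep_jam (Abs_jam z) k)" by (rule convX[OF bl_coord])
    hence "convergent (\<lambda>n. xs n k)" unfolding RX by (rule convergentI)
    thus ?thesis unfolding c_def by (simp add: convergent_LIMSEQ_iff)
  qed
  have cF: "fval c F \<le> M^2" if F: "adm_intervals F" for F
  proof -
    have lim: "(\<lambda>n. fval (xs n) F) \<longlonglongrightarrow> fval c F"
      by (rule fval_tendsto[OF cl adm_finite[OF F]]) (use adm_elem_finite[OF F] in blast)
    have bd: "fval (xs n) F \<le> M^2" for n
    proof -
      have "fval (xs n) F \<le> (jnorm (xs n))^2" by (rule fval_le[OF xsJ F])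
      also have "\<dots> \<le> M^2" using M[of n] by (simp add: norm_Rep RX power_mono jnorm_nonneg)
      finally show ?thesis .
    qed
    show ?thesis by (rule tendsto_upperbound[OF lim]) (auto simp: bd)
  qed
  have cJ: "c \<in> James" using James_I cF by blast
  define C where "C = Abs_jam c"
  have RC: "Rep_jam C = c" unfolding C_def by (simp add: Abs_jam_inverse cJ)
  define Y where "Y n = X n - C" for n
  have coordY: "(\<lambda>n. Rep_jam (Y n) k) \<longlonglongrightarrow> 0" for k
  proof -
    have "(\<lambda>n. xs n k - c k) \<longlonglongrightarrow> c k - c k" by (intro tendsto_diff cl tendsto_const)
    thus ?thesis by (simp add: Y_def RX RC)
  qed
  define K where "K = M + norm C"
  have bndY: "norm (Y n) \<le> K" for n
    unfolding Y_def K_def using norm_triangle_ineq4[of "X n" C] M[of n] by linarith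
  have K0: "0 \<le> K" using bndY[of 0] norm_ge_zero[of "Y 0"] by linarith
  define \<delta> where "\<delta> = \<phi> (\<lambda>z. Lf (Abs_jam z)) - Lf C"
  have LY: "(\<lambda>n. Lf (Y n)) \<longlonglongrightarrow> \<delta>"
  proof -
    have "(\<lambda>n. Lf (X n) - Lf C) \<longlonglongrightarrow> \<phi> (\<lambda>z. Lf (Abs_jam z)) - Lf C"
      by (intro tendsto_diff convX[OF bl_Lf] tendsto_const)
    thus ?thesis unfolding Y_def \<delta>_def by (simp add: linear_diff[OF bounded_linear.linear[OF bl_Lf]])
  qed
  show ?thesis
  proof (cases "\<delta> = 0")
    case True
    have "\<forall>f\<in>jdual. \<phi> f = f c"
    proof
      fix f assume f: "f \<in> jdual"
      let ?g = "\<lambda>x. f (Rep_jam x)"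
      have gbl: "bounded_linear ?g" by (rule jdual_bl[OF f])
      have "(\<lambda>n. ?g (X n) - ?g C) \<longlonglongrightarrow> \<phi> f - f c"
        using conv[OF f] by (intro tendsto_diff) (simp_all add: RX RC)
      hence "(\<lambda>n. ?g (Y n)) \<longlonglongrightarrow> \<phi> f - f c"
        unfolding Y_def by (simp add: linear_diff[OF bounded_linear.linear[OF gbl]])
      hence "\<phi> f - f c = 0" by (rule weak_null[OF coordY bndY LY[unfolded True] gbl])
      thus "\<phi> f = f c" by simp
    qed
    thus ?thesis using nt cJ by blast
  next
    case False
    define Cb where "Cb = norm C + 2 * \<bar>\<delta>\<bar> + 5 + 2 * K"
    have Cb0: "0 \<le> Cb" unfolding Cb_def using K0 by simp
    define \<epsilon> where "\<epsilon> = min 1 (min (\<bar>\<delta>\<bar> / 8) (\<delta>^2 / (16 * Cb + 1)))"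
    have e0: "0 < \<epsilon>" unfolding \<epsilon>_def using False Cb0 by simp
    have e1: "\<epsilon> \<le> 1" "\<epsilon> \<le> \<bar>\<delta>\<bar> / 8" "\<epsilon> \<le> \<delta>^2 / (16 * Cb + 1)"
      unfolding \<epsilon>_def by (meson min.cobounded1 min.cobounded2 order_trans)+
    have e2: "16 * Cb * \<epsilon> \<le> \<delta>^2"
    proof -
      have "\<epsilon> * (16 * Cb + 1) \<le> \<delta>^2" using e1(3) Cb0 by (simp add: field_simps)
      thus ?thesis using e0 by (simp add: algebra_simps)
    qed
    obtain p0 where p0: "\<forall>q\<ge>p0. norm (Rj {q..} C) \<le> \<epsilon>" using tail_small_jam[OF e0] by blast
    define \<eta> where "\<eta> j = \<epsilon> * (1/2::real)^(Suc j)" for j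
    have eta: "0 < \<eta> j" for j unfolding \<eta>_def using e0 by simp
    define Q where "Q j m = (\<bar>Lf (Y m) - \<delta>\<bar> \<le> \<eta> j)" for j m
    have Q: "eventually (Q j) sequentially" for j
    proof -
      have "(\<lambda>m. \<bar>Lf (Y m) - \<delta>\<bar>) \<longlonglongrightarrow> \<bar>\<delta> - \<delta>\<bar>" by (intro tendsto_rabs tendsto_diff LY tendsto_const)
      hence "\<forall>\<^sub>F m in sequentially. \<bar>Lf (Y m) - \<delta>\<bar> < \<eta> j" using eta[of j] by (intro order_tendstoD) auto
      thus ?thesis unfolding Q_def by eventually_elim auto
    qed
    obtain n p where np: "strict_mono n" "strict_mono p" "p 0 = p0"
      "\<And>j. Q j (n j)" "\<And>j. norm (Y (n j) - Rj (blk p j) (Y (n j))) \<le> \<eta> j"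
    proof -
      have "\<exists>n p. strict_mono n \<and> strict_mono p \<and> p 0 = p0 \<and>
           (\<forall>j. Q j (n j) \<and> norm (Y (n j) - Rj (blk p j) (Y (n j))) \<le> \<eta> j)"
        by (rule extract_blocks) (rule coordY, rule eta, rule Q)
      thus ?thesis using that by blast
    qed
    define U where "U j = Rj (blk p j) (Y (n j))" for j
    have ib: "jb2 (\<lambda>j. X (n j)) C U p \<delta> \<epsilon> \<epsilon> K"
    proof (unfold_locales)
      show "strict_mono p" by (rule np(2))
      show "Rep_jam (U j) k = 0" if "k \<notin> blk p j" for j k
        using that by (simp add: U_def Rep_Rj[OF cvx_blk] R_def)
      show "norm (X (n j) - C - U j) \<le> \<epsilon> * (1/2)^(Suc j)" for j
        using np(5)[of j] unfolding U_def Y_def \<eta>_def by simp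
      show "norm (U j) \<le> K" for j
        using norm_Rj[OF cvx_blk, of p j "Y (n j)"] bndY[of "n j"] unfolding U_def by linarith
      show "\<bar>Lf (U j) - \<delta>\<bar> \<le> 2 * \<epsilon> * (1/2)^(Suc j)" for j
      proof -
        have "Lf (U j) = Lf (Y (n j)) - Lf (Y (n j) - U j)"
          by (simp add: linear_diff[OF bounded_linear.linear[OF bl_Lf]])
        moreover have "\<bar>Lf (Y (n j) - U j)\<bar> \<le> \<eta> j" using Lf_le[of "Y (n j) - U j"] np(5)[of j] unfolding U_def by linarith
        moreover have "\<bar>Lf (Y (n j)) - \<delta>\<bar> \<le> \<eta> j" using np(4)[of j] unfolding Q_def by simp
        ultimately have "\<bar>Lf (U j) - \<delta>\<bar> \<le> 2 * \<eta> j" by (simp only: abs_le_iff) linarith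
        thus ?thesis unfolding \<eta>_def by simp
      qed
      show "norm (Rj {p 0..} C) \<le> \<epsilon>" using p0 np(3) by simp
      show "0 \<le> \<epsilon>" using e0 by simp
      show "\<delta> \<noteq> 0" by (rule False)
      show "3 * \<epsilon> + \<epsilon> \<le> \<bar>\<delta>\<bar> / 2" using e1(2) by simp
      show "4 * (norm C + 2 * \<bar>\<delta>\<bar> + 5 * \<epsilon> + 2 * K) * (\<epsilon> + 3 * \<epsilon>) \<le> \<delta>^2"
      proof -
        have "norm C + 2 * \<bar>\<delta>\<bar> + 5 * \<epsilon> + 2 * K \<le> Cb" unfolding Cb_def using e1(1) by simp
        hence "(norm C + 2 * \<bar>\<delta>\<bar> + 5 * \<epsilon> + 2 * K) * (16 * \<epsilon>) \<le> Cb * (16 * \<epsilon>)"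
          using e0 by (intro mult_right_mono) simp_all
        thus ?thesis using e2 by (simp add: algebra_simps)
      qed
    qed
    interpret jb2 "\<lambda>j. X (n j)" C U p \<delta> \<epsilon> \<epsilon> K by (rule ib)
    have lc: "lincomb a (xs \<circ> n) N = Rep_jam (\<Sum>j<N. a j *\<^sub>R X (n j))" for a N
      by (rule ext) (simp add: lincomb_def RX)
    have equiv: "equiv_unit_basis (xs \<circ> n)"
      unfolding equiv_unit_basis_def
    proof (intro exI[of _ "max Cu (2 / \<bar>\<delta>\<bar>) + 1"] conjI allI)
      show "0 < max Cu (2 / \<bar>\<delta>\<bar>) + 1" using Cu_nonneg by simp
      fix a N
      have u: "norm (\<Sum>j<N. a j *\<^sub>R X (n j)) \<le> Cu * jnorm (tr N a)" by (rule upper')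
      have l: "jnorm (tr N a) \<le> (2 / \<bar>\<delta>\<bar>) * norm (\<Sum>j<N. a j *\<^sub>R X (n j))" by (rule lower')
      have A0: "0 \<le> jnorm (tr N a)" by (rule jnorm_nonneg)
      show "jnorm (lincomb a unitvec N) \<le> (max Cu (2 / \<bar>\<delta>\<bar>) + 1) * jnorm (lincomb a (xs \<circ> n) N)"
        unfolding lincomb_unit lc norm_Rep[symmetric]
        using l by (rule order_trans) (intro mult_right_mono; simp)
      show "jnorm (lincomb a (xs \<circ> n) N) \<le> (max Cu (2 / \<bar>\<delta>\<bar>) + 1) * jnorm (lincomb a unitvec N)"
        unfolding lincomb_unit lc norm_Rep[symmetric]
        using u by (rule order_trans) (intro mult_right_mono A0; simp)
    qed
    have cs: "closed_span (xs \<circ> n) = Rep_jam ` Yc"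
    proof
      show "closed_span (xs \<circ> n) \<subseteq> Rep_jam ` Yc"
      proof
        fix z assume z: "z \<in> closed_span (xs \<circ> n)"
        hence zJ: "z \<in> James" unfolding closed_span_def by blast
        have "Abs_jam z \<in> Yc" unfolding Yc_def
        proof (intro CollectI allI impI)
          fix e :: real assume "0 < e"
          then obtain a N where "jnorm (\<lambda>i. z i - lincomb a (xs \<circ> n) N i) < e"
            using z unfolding closed_span_def by blast
          hence "norm (Abs_jam z - (\<Sum>j<N. a j *\<^sub>R X (n j))) < e"
            by (simp add: norm_Rep Rep_diff Abs_jam_inverse zJ lc)
          thus "\<exists>a N. norm (Abs_jam z - (\<Sum>j<N. a j *\<^sub>R X (n j))) < e" by blast
        qed
        thus "z \<in> Rep_jam ` Yc" using zJ by (metis Abs_jam_inverse image_eqI)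
      qed
      show "Rep_jam ` Yc \<subseteq> closed_span (xs \<circ> n)"
      proof
        fix z assume "z \<in> Rep_jam ` Yc"
        then obtain y where y: "y \<in> Yc" "z = Rep_jam y" by blast
        show "z \<in> closed_span (xs \<circ> n)" unfolding closed_span_def
        proof (intro CollectI conjI allI impI)
          show "z \<in> James" using y Rep_James by simp
          fix e :: real assume "0 < e"
          then obtain a N where "norm (y - (\<Sum>j<N. a j *\<^sub>R X (n j))) < e" using Yc_approx[OF y(1)] by blast
          thus "\<exists>a N. jnorm (\<lambda>i. z i - lincomb a (xs \<circ> n) N i) < e"
            using y(2) by (auto simp: norm_Rep Rep_diff lc)
        qed
      qed
    qed
    have compl: "complemented (closed_span (xs \<circ> n))"
      unfolding complemented_def cs
    proof (intro exI[of _ "\<lambda>z. Rep_jam (P (Abs_jam z))"] conjI)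
      have linP: "linear P" by (rule bounded_linear.linear[OF bl_P])
      obtain B where B: "\<And>x. norm (P x) \<le> norm x * B" using bounded_linear.bounded[OF bl_P] by blast
      show "\<forall>x\<in>James. Rep_jam (P (Abs_jam x)) \<in> James" by (simp add: Rep_James)
      show "\<forall>x\<in>James. \<forall>y\<in>James. Rep_jam (P (Abs_jam (\<lambda>i. x i + y i))) = (\<lambda>i. Rep_jam (P (Abs_jam x)) i + Rep_jam (P (Abs_jam y)) i)"
      proof (intro ballI)
        fix x y assume "x \<in> James" "y \<in> James"
        hence "Abs_jam (\<lambda>i. x i + y i) = Abs_jam x + Abs_jam y"
          by (intro jam_eqI) (simp add: Abs_jam_inverse James_add(1))
        thus "Rep_jam (P (Abs_jam (\<lambda>i. x i + y i))) = (\<lambda>i. Rep_jam (P (Abs_jam x)) i + Rep_jam (P (Abs_jam y)) i)"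
          by (simp add: linear_add[OF linP] Rep_add)
      qed
      show "\<forall>c. \<forall>x\<in>James. Rep_jam (P (Abs_jam (\<lambda>i. c * x i))) = (\<lambda>i. c * Rep_jam (P (Abs_jam x)) i)"
      proof (intro allI ballI)
        fix r x assume "x \<in> James"
        hence "Abs_jam (\<lambda>i. r * x i) = r *\<^sub>R Abs_jam x"
          by (intro jam_eqI) (simp add: Abs_jam_inverse James_scale_le(1))
        thus "Rep_jam (P (Abs_jam (\<lambda>i. r * x i))) = (\<lambda>i. r * Rep_jam (P (Abs_jam x)) i)"
          by (simp add: linear_scale[OF linP] Rep_scaleR)
      qed
      show "\<exists>C. \<forall>x\<in>James. jnorm (Rep_jam (P (Abs_jam x))) \<le> C * jnorm x"
      proof (intro exI ballI)
        fix x assume "x \<in> James"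
        thus "jnorm (Rep_jam (P (Abs_jam x))) \<le> B * jnorm x"
          using B[of "Abs_jam x"] by (simp add: norm_Rep Abs_jam_inverse mult.commute)
      qed
      show "\<forall>x\<in>James. Rep_jam (P (Abs_jam (Rep_jam (P (Abs_jam x))))) = Rep_jam (P (Abs_jam x))"
        by (simp add: Rep_jam_inverse P_id[OF P_Yc])
      show "(\<lambda>z. Rep_jam (P (Abs_jam z))) ` James = Rep_jam ` Yc"
      proof
        show "(\<lambda>z. Rep_jam (P (Abs_jam z))) ` James \<subseteq> Rep_jam ` Yc" using P_Yc by blast
        show "Rep_jam ` Yc \<subseteq> (\<lambda>z. Rep_jam (P (Abs_jam z))) ` James"
        proof
          fix z assume "z \<in> Rep_jam ` Yc"
          then obtain y where y: "y \<in> Yc" "z = Rep_jam y" by blast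
          have "z = Rep_jam (P (Abs_jam (Rep_jam y)))" using y by (simp add: Rep_jam_inverse P_id)
          thus "z \<in> (\<lambda>z. Rep_jam (P (Abs_jam z))) ` James" using Rep_James[of y] by blast
        qed
      qed
    qed
    show ?thesis using np(1) equiv compl by blast
  qed
qed


end
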